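(* Let $n\in\mathbb N$ and let $\hat A\in\mathrm{Extr}(\mathcal A^n_+)$ with $\langle n|\hat A|n\rangle>0$. Then there exists $t_0>0$ such that for all $t\ge t_0$, $\mathcal V^{\mathrm{norm}}_t[\hat A]\in\mathrm{Extr}(\mathcal D^n_+)$ and $\mathcal V^{\mathrm{norm}}_t[\hat A]\in\mathrm{Extr}(\mathcal D_+)$.
   Context: Let $\mathcal H=L^2(\mathbb R)$ with annihilation operator $\hat a$, number operator $\hat n=\hat a^\dagger\hat a$, Fock basis $\{|k\rangle\}$, $\hat D(\alpha)=\exp(\alpha\hat a^\dagger-\alpha^*\hat a)$, $\hat\Pi(\alpha)=\hat D(\alpha)(-1)^{\hat n}\hat D(\alpha)^\dagger$. The Wigner function of a trace-class $\hat A$ is $W_{\hat A}(\alpha)=\frac{2}{\pi}\mathrm{Tr}[\hat A\hat\Pi(\alpha)]$. A quasi-state is a Hermitian trace-class unit-trace operator; a state is a positive semi-definite quasi-state. With $\hat P_n=\sum_{k=0}^n|k\rangle\langle k|$: $\mathcal A^n_+$ is the set of quasi-states $\hat A$ with $\hat P_n\hat A\hat P_n=\hat A$ and $W_{\hat A}\ge0$ everywhere; $\mathcal D_+$ is the set of states with non-negative Wigner function; $\mathcal D^n_+=\mathcal D_+\cap\{\hat\rho:\hat P_n\hat\rho\hat P_n=\hat\rho\}$. $\mathrm{Extr}(\mathcal C)$ denotes the set of extreme points of a convex set $\mathcal C$. For $t>0$ and a trace-class operator $\hat A$ with $\hat P_N\hat A\hat P_N=\hat A$ for some $N$, the Vertigo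 map is $\mathcal V_t[\hat A]=\sum_{k\ge0}\frac{(t-1)^k}{k!}\,t^{\hat n/2}\hat a^k\hat A\hat a^{\dagger k}t^{\hat n/2}$ (a finite sum), equivalently characterized by $W_{\mathcal V_t[\hat A]}(\alpha)=W_{\hat A}(\sqrt t\,\alpha)\,e^{2(t-1)|\alpha|^2}$; and $\mathcal V^{\mathrm{norm}}_t[\hat A]=\mathcal V_t[\hat A]/\mathrm{Tr}\,\mathcal V_t[\hat A]$ whenever this trace is non-zero. *)

theory Defs
  imports Complex_Main
begin

text \<open>Operators on L2(R) are represented by their matrices in the Fock basis:
  an operator X corresponds to the function (\<lambda>i j. \<langle>i|X|j\<rangle>).\<close>

type_synonym fmat = "nat \<Rightarrow> nat \<Rightarrow> complex"

text \<open>Matrix elements of the displacement operator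
  D(b) = exp(b a^dagger - conj b a) = exp(-|b|^2/2) exp(b a^dagger) exp(-conj b a).\<close>
definition disp :: "complex \<Rightarrow> fmat" where
  "disp b m n = complex_of_real (exp (- (cmod b ^ 2) / 2)) *
     (\<Sum>k\<le>min m n. complex_of_real (sqrt (fact m * fact n) /
          (fact k * fact (m - k) * fact (n - k))) * b ^ (m - k) * (- cnj b) ^ (n - k))"

text \<open>Displaced parity Pi(a) = D(a) (-1)^n D(a)^dagger, matrix element \<langle>k|Pi(a)|j\<rangle>.\<close>
definition parity :: "complex \<Rightarrow> fmat" where
  "parity a k j = (\<Sum>l. disp a k l * (-1) ^ l * cnj (disp a j l))"

text \<open>Wigner function W_A(a) = (2/pi) Tr[A Pi(a)], Tr[A Pi] = \<Sum>_j \<Sum>_k A_jk Pi_kj.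
  (Real part taken: the value is real for Hermitian A.)\<close>
definition wigner :: "fmat \<Rightarrow> complex \<Rightarrow> real" where
  "wigner A a = 2 / pi * Re (\<Sum>j. \<Sum>k. A j k * parity a k j)"

definition hermitian :: "fmat \<Rightarrow> bool" where
  "hermitian A \<longleftrightarrow> (\<forall>i j. A j i = cnj (A i j))"

text \<open>P_n A P_n = A\<close>
definition supp_le :: "nat \<Rightarrow> fmat \<Rightarrow> bool" where
  "supp_le n A \<longleftrightarrow> (\<forall>i j. n < i \<or> n < j \<longrightarrow> A i j = 0)"

text \<open>Quasi-state with P_n A P_n = A (trace class automatically, being finite rank).\<close>
definition qstate_supp :: "nat \<Rightarrow> fmat \<Rightarrow> bool" where
  "qstate_supp n A \<longleftrightarrow> supp_le n A \<and> hermitian A \<and> (\<Sum>i\<le>n. A i i) = 1"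

text \<open>A Hermitian matrix
  that is positive semidefinite on finitely supported vectors and has summable diagonal
  is exactly the matrix of a positive trace-class operator.\<close>
definition is_state :: "fmat \<Rightarrow> bool" where
  "is_state \<rho> \<longleftrightarrow> hermitian \<rho> \<and>
     (\<forall>N (v::nat \<Rightarrow> complex). 0 \<le> Re (\<Sum>i\<le>N. \<Sum>j\<le>N. cnj (v i) * \<rho> i j * v j)) \<and>
     (\<lambda>i. \<rho> i i) sums 1"

definition A_plus :: "nat \<Rightarrow> fmat set" where
  "A_plus n = {A. qstate_supp n A \<and> (\<forall>a. 0 \<le> wigner A a)}"

definition D_plus :: "fmat set" where
  "D_plus = {\<rho>. is_state \<rho> \<and> (\<forall>a. 0 \<le> wigner \<rho> a)}"

definition D_plus_n :: "nat \<Rightarrow> fmat set" where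
  "D_plus_n n = D_plus \<inter> {\<rho>. supp_le n \<rho>}"

definition extr :: "fmat set \<Rightarrow> fmat set" where
  "extr C = {x \<in> C. \<forall>y z (l::real). y \<in> C \<longrightarrow> z \<in> C \<longrightarrow> 0 < l \<longrightarrow> l < 1 \<longrightarrow>
      x = (\<lambda>i j. complex_of_real l * y i j + complex_of_real (1 - l) * z i j) \<longrightarrow> y = z}"

text \<open>Vertigo map: V_t[A] = \<Sum>_k (t-1)^k/k! t^(n/2) a^k A a^dagger^k t^(n/2), written out in
  the Fock basis using a^dagger^k|j\<rangle> = sqrt((j+k)!/j!) |j+k\<rangle>.\<close>
definition vertigo :: "real \<Rightarrow> fmat \<Rightarrow> fmat" where
  "vertigo t A i j = (\<Sum>k. complex_of_real ((t - 1) ^ k / fact k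
       * t powr (real i / 2) * t powr (real j / 2)
       * sqrt (fact (i + k) / fact i) * sqrt (fact (j + k) / fact j)) * A (i + k) (j + k))"

definition mtrace :: "fmat \<Rightarrow> complex" where
  "mtrace A = (\<Sum>i. A i i)"

definition vertigo_norm :: "real \<Rightarrow> fmat \<Rightarrow> fmat" where
  "vertigo_norm t A = (\<lambda>i j. vertigo t A i j / mtrace (vertigo t A))"

end

theory Submission
  imports Defs
begin

definition dd :: "complex \<Rightarrow> nat \<Rightarrow> nat \<Rightarrow> complex" where
  "dd b m n = (\<Sum>k\<le>min m n. b ^ (m - k) * (- cnj b) ^ (n - k) / (fact k * fact (m - k) * fact (n - k)))"

lemma disp_dd: "disp b m n = complex_of_real (exp (- (cmod b ^ 2) / 2) * sqrt (fact m * fact n)) * dd b m n"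
  unfolding disp_def dd_def sum_distrib_left
  by (rule sum.cong) (auto simp: of_real_mult)

lemma comb_id:
  assumes "max p q \<le> (l::nat)"
  shows "(\<Sum>r\<in>{r. r \<le> min p q \<and> p + q \<le> l + r}. fact p * fact q / (fact r * fact (p - r) * fact (q - r) * fact (l + r - p - q)) :: real)
    = fact l / (fact (l - p) * fact (l - q))"
proof -
  have v: "(\<Sum>k\<le>q. real (p choose k) * real ((l - p) choose (q - k))) = real (l choose q)"
    using vandermonde[of p "l - p" q] assms by (simp flip: of_nat_mult of_nat_sum)
  have "(\<Sum>k\<le>q. real (p choose k) * real ((l - p) choose (q - k)))
      = (\<Sum>k\<in>{r. r \<le> min p q \<and> p + q \<le> l + r}. real (p choose k) * real ((l - p) choose (q - k)))"
    using assms by (intro sum.mono_neutral_right) auto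
  also have "\<dots> = (\<Sum>k\<in>{r. r \<le> min p q \<and> p + q \<le> l + r}. fact p * fact q / (fact k * fact (p - k) * fact (q - k) * fact (l + k - p - q)) * (fact (l - p) / fact q))"
  proof (rule sum.cong[OF refl])
    fix k assume k: "k \<in> {r. r \<le> min p q \<and> p + q \<le> l + r}"
    then have a: "k \<le> p" "q - k \<le> l - p" by auto
    have e: "l - (p + (q - k)) = k + l - (p + q)" using k assms by auto
    show "real (p choose k) * real ((l - p) choose (q - k)) = fact p * fact q / (fact k * fact (p - k) * fact (q - k) * fact (l + k - p - q)) * (fact (l - p) / fact q)"
      using a by (simp add: binomial_fact e field_simps)
  qed
  finally have X: "(\<Sum>k\<le>q. real (p choose k) * real ((l - p) choose (q - k))) = (\<Sum>k\<in>{r. r \<le> min p q \<and> p + q \<le> l + r}. fact p * fact q / (fact k * fact (p - k) * fact (q - k) * fact (l + k - p - q)) * (fact (l - p) / fact q))" .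
  have "real (l choose q) = (\<Sum>k\<in>{r. r \<le> min p q \<and> p + q \<le> l + r}. fact p * fact q / (fact k * fact (p - k) * fact (q - k) * fact (l + k - p - q))) * (fact (l - p) / fact q)"
    using X by (simp only: v sum_distrib_right)
  moreover have "real (l choose q) = fact l / (fact q * fact (l - q))" using assms by (simp add: binomial_fact)
  ultimately show ?thesis by (simp add: field_simps)
qed

lemma FE:
  fixes x y :: complex
  shows "(\<lambda>l. if max p q \<le> l then of_real (fact l / (fact (l-p) * fact (l-q))) * x^(l-p) * y^(l-q) else 0) sums
     (exp (x*y) * (\<Sum>r\<le>min p q. of_real (fact p * fact q / (fact r * fact (p-r) * fact (q-r))) * y^(p-r) * x^(q-r)))"
proof -
  define c where "c r = (fact p * fact q / (fact r * fact (p-r) * fact (q-r)) :: real)" for r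
  define g where "g r l = (if p + q - r \<le> l then of_real (c r / fact (l - (p+q-r))) * y^(p-r) * x^(q-r) * (x*y)^(l-(p+q-r)) else (0::complex))" for r l
  have gs: "g r sums (of_real (c r) * y^(p-r) * x^(q-r) * exp (x*y))" for r
  proof -
    have h1: "(\<lambda>s. of_real (c r) * y^(p-r) * x^(q-r) * ((x*y)^s /\<^sub>R fact s)) sums (of_real (c r) * y^(p-r) * x^(q-r) * exp (x*y))"
      by (rule sums_mult[OF exp_converges])
    have h2: "(\<lambda>s. g r (s + (p+q-r))) = (\<lambda>s. of_real (c r) * y^(p-r) * x^(q-r) * ((x*y)^s /\<^sub>R fact s))"
      by (auto simp: g_def scaleR_conv_of_real divide_inverse mult_ac)
    have h: "(\<lambda>s. g r (s + (p+q-r))) sums (of_real (c r) * y^(p-r) * x^(q-r) * exp (x*y))"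
      unfolding h2 by (rule h1)
    have z: "\<And>i. i < p+q-r \<Longrightarrow> g r i = 0" by (simp add: g_def)
    show ?thesis using sums_zero_iff_shift[of "p+q-r" "g r", OF z] h by simp
  qed
  have "(\<lambda>l. \<Sum>r\<le>min p q. g r l) sums (\<Sum>r\<le>min p q. of_real (c r) * y^(p-r) * x^(q-r) * exp (x*y))"
    by (rule sums_sum) (rule gs)
  moreover have "(\<lambda>l. \<Sum>r\<le>min p q. g r l) = (\<lambda>l. if max p q \<le> l then of_real (fact l / (fact (l-p) * fact (l-q))) * x^(l-p) * y^(l-q) else 0)"
  proof
    fix l
    show "(\<Sum>r\<le>min p q. g r l) = (if max p q \<le> l then of_real (fact l / (fact (l-p) * fact (l-q))) * x^(l-p) * y^(l-q) else 0)"
    proof (cases "max p q \<le> l")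
      case True
      have "(\<Sum>r\<le>min p q. g r l) = (\<Sum>r\<in>{r. r \<le> min p q \<and> p + q \<le> l + r}. g r l)"
        by (rule sum.mono_neutral_right) (auto simp: g_def)
      also have "\<dots> = (\<Sum>r\<in>{r. r \<le> min p q \<and> p + q \<le> l + r}. of_real (c r / fact (l + r - p - q)) * (x^(l-p) * y^(l-q)))"
      proof (rule sum.cong[OF refl])
        fix r assume r: "r \<in> {r. r \<le> min p q \<and> p + q \<le> l + r}"
        have e1: "l - (p+q-r) = l + r - p - q" using r by auto
        have ex: "x^(l-p) = x^(q-r) * x^(l + r - p - q)" using r True by (simp flip: power_add)
        have ey: "y^(l-q) = y^(p-r) * y^(l + r - p - q)" using r True by (simp flip: power_add)
        show "g r l = of_real (c r / fact (l + r - p - q)) * (x^(l-p) * y^(l-q))"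
          using r by (simp add: g_def e1 ex ey power_mult_distrib mult_ac le_diff_conv)
      qed
      also have "\<dots> = of_real (\<Sum>r\<in>{r. r \<le> min p q \<and> p + q \<le> l + r}. c r / fact (l + r - p - q)) * (x^(l-p) * y^(l-q))"
        by (simp add: sum_distrib_right)
      also have "(\<Sum>r\<in>{r. r \<le> min p q \<and> p + q \<le> l + r}. c r / fact (l + r - p - q)) = fact l / (fact (l - p) * fact (l - q))"
        using comb_id[OF True] by (simp add: c_def)
      finally show ?thesis using True by (simp add: mult_ac)
    next
      case False
      then show ?thesis by (auto intro!: sum.neutral simp: g_def)
    qed
  qed
  ultimately show ?thesis
    by (simp add: sum_distrib_left c_def mult_ac)
qed

lemma binsum:
  assumes "r \<le> (k::nat)"
  shows "(\<Sum>m\<le>k. if r \<le> m then 1 / (fact (k - m) * fact (m - r)) else 0) = (2 ^ (k - r) / fact (k - r) :: complex)"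
proof -
  have "(\<Sum>m\<le>k. if r \<le> m then 1 / (fact (k - m) * fact (m - r)) else 0) = (\<Sum>m\<in>{r..k}. 1 / (fact (k - m) * fact (m - r)) :: complex)"
    by (rule sum.mono_neutral_cong_right) auto
  also have "\<dots> = (\<Sum>i\<in>{0..k-r}. 1 / (fact (k - (i + r)) * fact (i + r - r)))"
    using sum.shift_bounds_cl_nat_ivl[of "\<lambda>m. 1 / (fact (k - m) * fact (m - r)) :: complex" 0 r "k - r"] assms by simp
  also have "\<dots> = (\<Sum>i\<le>k-r. of_nat ((k - r) choose i) / fact (k - r))"
    by (rule sum.cong) (auto simp: binomial_fact field_simps)
  also have "\<dots> = of_nat (\<Sum>i\<le>k-r. ((k - r) choose i)) / fact (k - r)"
    by (simp add: sum_divide_distrib)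
  also have "\<dots> = 2 ^ (k - r) / fact (k - r)" by (simp add: choose_row_sum)
  finally show ?thesis .
qed

lemma triple:
  fixes c x :: complex
  shows "(\<Sum>m\<le>k. \<Sum>m'\<le>j. (c^(k-m) / (fact m * fact (k-m))) * (x^(j-m') / (fact m' * fact (j-m'))) *
      (\<Sum>r\<le>min m m'. of_real (fact m * fact m' / (fact r * fact (m-r) * fact (m'-r))) * c^(m-r) * x^(m'-r)))
    = (\<Sum>r\<le>min k j. (2*c)^(k-r) * x^(j-r) * 2^(j-r) / (fact r * fact (k-r) * fact (j-r)))"
proof -
  define H where "H m m' r = c^(k-r) * x^(j-r) / fact r * (1 / (fact (k-m) * fact (m-r))) * (1 / (fact (j-m') * fact (m'-r)))" for m m' r
  have "(\<Sum>m\<le>k. \<Sum>m'\<le>j. (c^(k-m) / (fact m * fact (k-m))) * (x^(j-m') / (fact m' * fact (j-m'))) *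
      (\<Sum>r\<le>min m m'. of_real (fact m * fact m' / (fact r * fact (m-r) * fact (m'-r))) * c^(m-r) * x^(m'-r)))
    = (\<Sum>m\<le>k. \<Sum>m'\<le>j. \<Sum>r\<le>min k j. if r \<le> m \<and> r \<le> m' then H m m' r else 0)"
  proof (intro sum.cong refl)
    fix m m' assume m: "m \<in> {..k}" and m': "m' \<in> {..j}"
    have "(c^(k-m) / (fact m * fact (k-m))) * (x^(j-m') / (fact m' * fact (j-m'))) *
      (\<Sum>r\<le>min m m'. of_real (fact m * fact m' / (fact r * fact (m-r) * fact (m'-r))) * c^(m-r) * x^(m'-r))
      = (\<Sum>r\<le>min m m'. H m m' r)"
      unfolding sum_distrib_left
    proof (rule sum.cong[OF refl])
      fix r assume r: "r \<in> {..min m m'}"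
      have ec: "c^(k-r) = c^(k-m) * c^(m-r)" using r m by (simp flip: power_add)
      have ex: "x^(j-r) = x^(j-m') * x^(m'-r)" using r m' by (simp flip: power_add)
      show "(c^(k-m) / (fact m * fact (k-m))) * (x^(j-m') / (fact m' * fact (j-m'))) *
          (of_real (fact m * fact m' / (fact r * fact (m-r) * fact (m'-r))) * c^(m-r) * x^(m'-r)) = H m m' r"
        unfolding H_def ec ex by (simp add: field_simps)
    qed
    also have "\<dots> = (\<Sum>r\<le>min k j. if r \<le> m \<and> r \<le> m' then H m m' r else 0)"
      using m m' by (intro sum.mono_neutral_cong_left) auto
    finally show "(c^(k-m) / (fact m * fact (k-m))) * (x^(j-m') / (fact m' * fact (j-m'))) *
      (\<Sum>r\<le>min m m'. of_real (fact m * fact m' / (fact r * fact (m-r) * fact (m'-r))) * c^(m-r) * x^(m'-r))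
      = (\<Sum>r\<le>min k j. if r \<le> m \<and> r \<le> m' then H m m' r else 0)" .
  qed
  also have "\<dots> = (\<Sum>r\<le>min k j. \<Sum>m\<le>k. \<Sum>m'\<le>j. if r \<le> m \<and> r \<le> m' then H m m' r else 0)"
    by (simp add: sum.swap[of _ "{..min k j}"])
  also have "\<dots> = (\<Sum>r\<le>min k j. c^(k-r) * x^(j-r) / fact r *
       (\<Sum>m\<le>k. if r \<le> m then 1 / (fact (k - m) * fact (m - r)) else 0) *
       (\<Sum>m'\<le>j. if r \<le> m' then 1 / (fact (j - m') * fact (m' - r)) else 0))"
  proof (intro sum.cong refl)
    fix r
    have "(\<Sum>m\<le>k. \<Sum>m'\<le>j. if r \<le> m \<and> r \<le> m' then H m m' r else 0) =
       (\<Sum>m\<le>k. \<Sum>m'\<le>j. c^(k-r) * x^(j-r) / fact r * (if r \<le> m then 1 / (fact (k - m) * fact (m - r)) else 0) *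
          (if r \<le> m' then 1 / (fact (j - m') * fact (m' - r)) else 0))"
      by (intro sum.cong refl) (simp add: H_def)
    also have "\<dots> = c^(k-r) * x^(j-r) / fact r *
       (\<Sum>m\<le>k. if r \<le> m then 1 / (fact (k - m) * fact (m - r)) else 0) *
       (\<Sum>m'\<le>j. if r \<le> m' then 1 / (fact (j - m') * fact (m' - r)) else 0)"
    proof -
      have "(\<Sum>m\<le>k. \<Sum>m'\<le>j. c^(k-r) * x^(j-r) / fact r * (if r \<le> m then 1 / (fact (k - m) * fact (m - r)) else 0) *
          (if r \<le> m' then 1 / (fact (j - m') * fact (m' - r)) else 0)) = c^(k-r) * x^(j-r) / fact r *
          (\<Sum>m\<le>k. \<Sum>m'\<le>j. (if r \<le> m then 1 / (fact (k - m) * fact (m - r)) else 0) *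
          (if r \<le> m' then 1 / (fact (j - m') * fact (m' - r)) else 0))"
        by (simp add: sum_distrib_left mult.assoc)
      then show ?thesis by (simp add: sum_product mult.assoc)
    qed
    finally show "(\<Sum>m\<le>k. \<Sum>m'\<le>j. if r \<le> m \<and> r \<le> m' then H m m' r else 0) = c^(k-r) * x^(j-r) / fact r *
       (\<Sum>m\<le>k. if r \<le> m then 1 / (fact (k - m) * fact (m - r)) else 0) *
       (\<Sum>m'\<le>j. if r \<le> m' then 1 / (fact (j - m') * fact (m' - r)) else 0)" .
  qed
  also have "\<dots> = (\<Sum>r\<le>min k j. (2*c)^(k-r) * x^(j-r) * 2^(j-r) / (fact r * fact (k-r) * fact (j-r)))"
    by (intro sum.cong refl) (simp add: binsum power_mult_distrib field_simps)
  finally show ?thesis .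
qed

lemma dd_split1: "dd c k l = (\<Sum>m\<le>k. if m \<le> l then c^(k-m) / (fact m * fact (k-m)) * ((- cnj c)^(l-m) / fact (l-m)) else 0)"
proof -
  have "{..min k l} = {m\<in>{..k}. m \<le> l}" by auto
  then have "dd c k l = (\<Sum>m\<in>{m\<in>{..k}. m \<le> l}. c^(k-m) / (fact m * fact (k-m)) * ((- cnj c)^(l-m) / fact (l-m)))"
    unfolding dd_def by (simp add: field_simps)
  then show ?thesis by (simp only: sum.inter_filter[OF finite_atMost])
qed

lemma dd_split2: "dd c l j = (\<Sum>m'\<le>j. if m' \<le> l then (- cnj c)^(j-m') / (fact m' * fact (j-m')) * (c^(l-m') / fact (l-m')) else 0)"
proof -
  have "{..min l j} = {m\<in>{..j}. m \<le> l}" by auto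
  then have "dd c l j = (\<Sum>m\<in>{m\<in>{..j}. m \<le> l}. (- cnj c)^(j-m) / (fact m * fact (j-m)) * (c^(l-m) / fact (l-m)))"
    unfolding dd_def by (simp add: field_simps)
  then show ?thesis by (simp only: sum.inter_filter[OF finite_atMost])
qed

lemma DD: "(\<lambda>l. fact l * dd c k l * dd c l j) sums (of_real (exp (- (cmod c ^ 2))) * dd (2*c) k j)"
proof -
  define x where "x = - cnj c"
  define \<alpha> where "\<alpha> m = c^(k-m) / (fact m * fact (k-m))" for m
  define \<beta> where "\<beta> m' = x^(j-m') / (fact m' * fact (j-m'))" for m'
  define T where "T m m' l = (if max m m' \<le> l then of_real (fact l / (fact (l-m) * fact (l-m'))) * x^(l-m) * c^(l-m') else 0)" for m m' l
  define S where "S m m' = (\<Sum>r\<le>min m m'. of_real (fact m * fact m' / (fact r * fact (m-r) * fact (m'-r))) * c^(m-r) * x^(m'-r))" for m m'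
  have xc: "x * c = - of_real ((cmod c)^2)"
    using complex_norm_square[of c] by (simp add: x_def mult.commute)
  have expand: "fact l * dd c k l * dd c l j = (\<Sum>m\<le>k. \<Sum>m'\<le>j. \<alpha> m * \<beta> m' * T m m' l)" for l
  proof -
    have "fact l * dd c k l * dd c l j = fact l * ((\<Sum>m\<le>k. if m \<le> l then \<alpha> m * (x^(l-m) / fact (l-m)) else 0) *
        (\<Sum>m'\<le>j. if m' \<le> l then \<beta> m' * (c^(l-m') / fact (l-m')) else 0))"
      unfolding dd_split1[of c k l] dd_split2[of c l j] \<alpha>_def \<beta>_def x_def by simp
    also have "\<dots> = (\<Sum>m\<le>k. \<Sum>m'\<le>j. fact l * ((if m \<le> l then \<alpha> m * (x^(l-m) / fact (l-m)) else 0) *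
        (if m' \<le> l then \<beta> m' * (c^(l-m') / fact (l-m')) else 0)))"
      by (subst sum_product) (simp only: sum_distrib_left)
    also have "\<dots> = (\<Sum>m\<le>k. \<Sum>m'\<le>j. \<alpha> m * \<beta> m' * T m m' l)"
      by (intro sum.cong refl) (simp add: T_def)
    finally show ?thesis .
  qed
  have "(\<lambda>l. \<Sum>m\<le>k. \<Sum>m'\<le>j. \<alpha> m * \<beta> m' * T m m' l) sums (\<Sum>m\<le>k. \<Sum>m'\<le>j. \<alpha> m * \<beta> m' * (exp (x * c) * S m m'))"
  proof (intro sums_sum sums_mult)
    fix m m'
    show "(\<lambda>l. T m m' l) sums (exp (x * c) * S m m')"
      using FE[of m m' x c] unfolding T_def S_def by simp
  qed
  also have "(\<Sum>m\<le>k. \<Sum>m'\<le>j. \<alpha> m * \<beta> m' * (exp (x * c) * S m m')) = exp (x * c) * (\<Sum>m\<le>k. \<Sum>m'\<le>j. \<alpha> m * \<beta> m' * S m m')"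
    by (simp add: sum_distrib_left mult_ac)
  also have "(\<Sum>m\<le>k. \<Sum>m'\<le>j. \<alpha> m * \<beta> m' * S m m') = dd (2*c) k j"
  proof -
    have h: "\<And>n. (- (cnj c * 2))^n = (-cnj c)^n * (2::complex)^n" by (metis mult_minus_left power_mult_distrib)
    show ?thesis
    unfolding \<alpha>_def \<beta>_def S_def triple dd_def x_def
    by (intro sum.cong refl) (simp add: h power_mult_distrib field_simps)
  qed
  also have "exp (x * c) = of_real (exp (- (cmod c ^ 2)))"
    by (simp add: xc flip: exp_of_real)
  finally show ?thesis by (simp add: expand)
qed

lemma aux4: "(s1::complex) * u * (s2 * v) / D = (s1 * s2) * (u * v / D)"
  by simp

lemma dd_neg: "dd (-a) k l = (-1)^(k+l) * dd a k l"
  unfolding dd_def sum_distrib_left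
proof (rule sum.cong[OF refl])
  fix m assume m: "m \<in> {..min k l}"
  have kl: "k + l = ((k - m) + (l - m)) + 2 * m" using m by auto
  have e: "(-1::complex)^(k+l) = (-1)^(k-m) * (-1)^(l-m)"
  proof -
    have "(-1::complex)^(k+l) = ((-1)^(k-m) * (-1)^(l-m)) * ((-1)^2)^m"
      by (simp only: kl power_add power_mult)
    then show ?thesis by simp
  qed
  have 1: "(-a)^(k-m) = (-1)^(k-m) * a^(k-m)" by (rule power_minus)
  have "- cnj (-a) = - (- cnj a)" by simp
  then have 2: "(- cnj (-a))^(l-m) = (-1)^(l-m) * (- cnj a)^(l-m)" by (simp only: power_minus[of "- cnj a"])
  show "(-a)^(k-m) * (- cnj (-a))^(l-m) / (fact m * fact (k-m) * fact (l-m)) =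
      (-1)^(k+l) * (a^(k-m) * (- cnj a)^(l-m) / (fact m * fact (k-m) * fact (l-m)))"
    unfolding e 1 2 by (rule aux4)
qed

lemma dd_cnj: "cnj (dd a j l) = dd (-a) l j"
  unfolding dd_def cnj_sum
  by (rule sum.cong) (auto simp: min.commute mult_ac)

lemma parity_closed: "parity a k j = (-1)^k * disp (-2*a) k j"
proof -
  define E where "E = exp (- (cmod a ^ 2) / 2)"
  have "(\<lambda>l. of_real (E * E * sqrt (fact k * fact j)) * (-1)^k * (fact l * dd (-a) k l * dd (-a) l j)) sums
      (of_real (E * E * sqrt (fact k * fact j)) * (-1)^k * (of_real (exp (- (cmod (-a) ^ 2))) * dd (2*(-a)) k j))"
    by (rule sums_mult[OF DD])
  moreover have "(\<lambda>l. of_real (E * E * sqrt (fact k * fact j)) * (-1)^k * (fact l * dd (-a) k l * dd (-a) l j))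
      = (\<lambda>l. disp a k l * (-1)^l * cnj (disp a j l))"
  proof
    fix l
    have sq: "sqrt (fact k * fact l) * sqrt (fact j * fact l) = sqrt (fact k * fact j) * (fact l :: real)"
      by (simp add: real_sqrt_mult)
    have s1: "(-1::complex)^l * dd a k l = (-1)^k * dd (-a) k l"
      by (simp add: dd_neg power_add)
    show "of_real (E * E * sqrt (fact k * fact j)) * (-1)^k * (fact l * dd (-a) k l * dd (-a) l j)
      = disp a k l * (-1)^l * cnj (disp a j l)"
    proof -
      have "disp a k l * (-1)^l * cnj (disp a j l) = of_real (E * sqrt (fact k * fact l)) * of_real (E * sqrt (fact j * fact l)) * ((-1)^l * dd a k l) * cnj (dd a j l)"
        unfolding disp_dd E_def[symmetric] by (simp add: mult_ac)
      also have "\<dots> = of_real (E * sqrt (fact k * fact l) * (E * sqrt (fact j * fact l))) * ((-1)^k * dd (-a) k l) * dd (-a) l j"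
        by (simp only: s1 dd_cnj of_real_mult)
      also have "E * sqrt (fact k * fact l) * (E * sqrt (fact j * fact l)) = E * E * sqrt (fact k * fact j) * fact l"
        using sq by (simp add: mult_ac)
      finally show ?thesis by (simp add: mult_ac)
    qed
  qed
  moreover have "of_real (E * E * sqrt (fact k * fact j)) * (-1)^k * (of_real (exp (- (cmod (-a) ^ 2))) * dd (2*(-a)) k j)
     = (-1)^k * disp (-2*a) k j"
  proof -
    have "E * E * exp (- (cmod a ^ 2)) = exp (- (cmod (-2*a) ^ 2) / 2)"
      unfolding E_def by (simp add: norm_mult power_mult_distrib flip: exp_add)
    then show ?thesis unfolding disp_dd by (simp add: mult_ac flip: of_real_mult)
  qed
  ultimately show ?thesis unfolding parity_def by (simp add: sums_iff)
qed

definition WF :: "nat \<Rightarrow> fmat \<Rightarrow> complex \<Rightarrow> complex" where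
  "WF n X b = (\<Sum>j\<le>n. \<Sum>k\<le>n. X j k * (-1)^k * disp b k j)"

lemma supp_leD: "supp_le n X \<Longrightarrow> n < i \<or> n < j \<Longrightarrow> X i j = 0"
  unfolding supp_le_def by blast

lemma wigner_WF:
  assumes "supp_le n X"
  shows "wigner X a = 2 / pi * Re (WF n X (-2*a))"
proof -
  have inner: "(\<Sum>k. X j k * parity a k j) = (\<Sum>k\<le>n. X j k * (-1)^k * disp (-2*a) k j)" for j
    by (subst suminf_finite[of "{..n}"]) (auto simp: supp_leD[OF assms] parity_closed mult_ac)
  have "(\<Sum>j. \<Sum>k. X j k * parity a k j) = (\<Sum>j\<le>n. \<Sum>k\<le>n. X j k * (-1)^k * disp (-2*a) k j)"
    unfolding inner by (subst suminf_finite[of "{..n}"]) (auto simp: supp_leD[OF assms])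
  then show ?thesis unfolding wigner_def WF_def by simp
qed

definition vc :: "real \<Rightarrow> nat \<Rightarrow> nat \<Rightarrow> nat \<Rightarrow> real" where
  "vc t i j k = (t - 1) ^ k / fact k * t powr (real i / 2) * t powr (real j / 2)
       * sqrt (fact (i + k) / fact i) * sqrt (fact (j + k) / fact j)"

lemma vertigo_fin:
  assumes "supp_le n X"
  shows "vertigo t X i j = (\<Sum>k\<le>n. complex_of_real (vc t i j k) * X (i + k) (j + k))"
  unfolding vertigo_def vc_def
  by (subst suminf_finite[of "{..n}"]) (auto simp: supp_leD[OF assms])

lemma supp_vertigo:
  assumes "supp_le n X"
  shows "supp_le n (vertigo t X)"
  unfolding supp_le_def
proof (intro allI impI)
  fix i j assume "n < i \<or> n < j"
  then show "vertigo t X i j = 0"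
    unfolding vertigo_fin[OF assms] by (auto intro!: sum.neutral simp: supp_leD[OF assms])
qed

lemma powr_half: "0 < t \<Longrightarrow> t powr (real i / 2) = sqrt t ^ i"
proof -
  assume t: "0 < t"
  have "sqrt t ^ i = (t powr (1/2)) powr real i"
    using t by (simp add: powr_half_sqrt powr_realpow)
  also have "\<dots> = t powr (real i / 2)" by (simp add: powr_powr)
  finally show ?thesis by simp
qed

lemma shift_sum:
  fixes H :: "nat \<Rightarrow> nat \<Rightarrow> 'a::comm_monoid_add"
  assumes "\<And>j p. n < p \<Longrightarrow> H j p = 0"
  shows "(\<Sum>j\<le>n. H j (j + s)) = (\<Sum>p\<le>n. if s \<le> p then H (p - s) p else 0)"
proof (cases "s \<le> n")
  case True
  have "(\<Sum>j\<le>n. H j (j + s)) = (\<Sum>j\<in>{0..n-s}. H j (j + s))"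
    using assms by (intro sum.mono_neutral_right) auto
  also have "\<dots> = (\<Sum>p\<in>{s..n}. H (p - s) p)"
    using sum.shift_bounds_cl_nat_ivl[of "\<lambda>p. H (p - s) p" 0 s "n - s"] True by (simp add: add.commute)
  also have "\<dots> = (\<Sum>p\<le>n. if s \<le> p then H (p - s) p else 0)"
    by (intro sum.mono_neutral_cong_left) auto
  finally show ?thesis .
next
  case False
  then show ?thesis using assms by (auto intro!: sum.neutral)
qed

lemma binom_inner:
  fixes \<tau> :: real
  assumes "m \<le> p" "m \<le> q"
  shows "(\<Sum>s\<le>m. \<tau>^(p+q-2*s) * (1-\<tau>^2)^s / (fact s * fact (m-s))) = \<tau>^(p+q-2*m) / fact m"
proof -
  have "(\<Sum>s\<le>m. \<tau>^(p+q-2*s) * (1-\<tau>^2)^s / (fact s * fact (m-s)))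
      = (\<Sum>s\<le>m. \<tau>^(p+q-2*m) / fact m * (real (m choose s) * (1-\<tau>^2)^s * (\<tau>^2)^(m-s)))"
  proof (rule sum.cong[OF refl])
    fix s assume s: "s \<in> {..m}"
    have e: "\<tau>^(p+q-2*s) = \<tau>^(p+q-2*m) * (\<tau>^2)^(m-s)"
    proof -
      have "p+q-2*s = (p+q-2*m) + 2*(m-s)" using s assms by auto
      then show ?thesis by (simp add: power_add power_mult)
    qed
    show "\<tau>^(p+q-2*s) * (1-\<tau>^2)^s / (fact s * fact (m-s)) = \<tau>^(p+q-2*m) / fact m * (real (m choose s) * (1-\<tau>^2)^s * (\<tau>^2)^(m-s))"
      unfolding e using s by (simp add: binomial_fact field_simps)
  qed
  also have "\<dots> = \<tau>^(p+q-2*m) / fact m * ((1-\<tau>^2) + \<tau>^2)^m"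
    by (simp only: binomial_ring sum_distrib_left)
  finally show ?thesis by simp
qed

lemma VI:
  fixes \<tau> :: real
  shows "(\<Sum>s\<le>min p q. of_real (\<tau>^(p+q-2*s) * (1-\<tau>^2)^s / fact s) * dd b (q-s) (p-s)) = dd (of_real \<tau> * b) q p"
proof -
  define M where "M = min p q"
  define g where "g s m' = of_real (\<tau>^(p+q-2*s) * (1-\<tau>^2)^s / fact s) * (b^(q-(s+m')) * (-cnj b)^(p-(s+m')) / (fact m' * fact (q-(s+m')) * fact (p-(s+m'))))" for s m'
  have "(\<Sum>s\<le>M. of_real (\<tau>^(p+q-2*s) * (1-\<tau>^2)^s / fact s) * dd b (q-s) (p-s)) = (\<Sum>s\<le>M. \<Sum>m'\<le>M-s. g s m')"
  proof (rule sum.cong[OF refl])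
    fix s assume "s \<in> {..M}"
    have "min (q-s) (p-s) = M - s" by (auto simp: M_def)
    then show "of_real (\<tau>^(p+q-2*s) * (1-\<tau>^2)^s / fact s) * dd b (q-s) (p-s) = (\<Sum>m'\<le>M-s. g s m')"
      unfolding dd_def g_def sum_distrib_left by (simp add: diff_diff_add)
  qed
  also have "\<dots> = (\<Sum>(s,m')\<in>{(s,m'). s + m' \<le> M}. g s m')"
  proof -
    have "Sigma {..M} (\<lambda>s. {..M-s}) = {(s,m'). s + m' \<le> M}" by auto
    then show ?thesis by (simp add: sum.Sigma)
  qed
  also have "\<dots> = (\<Sum>m\<le>M. \<Sum>s\<le>m. g s (m - s))"
    by (rule sum.triangle_reindex_eq)
  also have "\<dots> = (\<Sum>m\<le>M. b^(q-m) * (-cnj b)^(p-m) / (fact (q-m) * fact (p-m)) *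
        of_real (\<Sum>s\<le>m. \<tau>^(p+q-2*s) * (1-\<tau>^2)^s / (fact s * fact (m-s))))"
  proof (rule sum.cong[OF refl])
    fix m assume "m \<in> {..M}"
    show "(\<Sum>s\<le>m. g s (m - s)) = b^(q-m) * (-cnj b)^(p-m) / (fact (q-m) * fact (p-m)) *
        of_real (\<Sum>s\<le>m. \<tau>^(p+q-2*s) * (1-\<tau>^2)^s / (fact s * fact (m-s)))"
      unfolding of_real_sum sum_distrib_left
      by (rule sum.cong[OF refl]) (auto simp: g_def field_simps)
  qed
  also have "\<dots> = (\<Sum>m\<le>M. b^(q-m) * (-cnj b)^(p-m) / (fact (q-m) * fact (p-m)) * of_real (\<tau>^(p+q-2*m) / fact m))"
    by (rule sum.cong[OF refl]) (simp add: binom_inner M_def)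
  also have "\<dots> = dd (of_real \<tau> * b) q p"
    unfolding dd_def M_def
  proof (rule sum.cong)
    show "{..min p q} = {..min q p}" by (simp add: min.commute)
  next
    fix m assume m: "m \<in> {..min q p}"
    have e: "\<tau>^(p+q-2*m) = \<tau>^(q-m) * \<tau>^(p-m)"
    proof -
      have "p+q-2*m = (q-m) + (p-m)" using m by auto
      then show ?thesis by (simp add: power_add)
    qed
    show "b^(q-m) * (-cnj b)^(p-m) / (fact (q-m) * fact (p-m)) * of_real (\<tau>^(p+q-2*m) / fact m) =
       (of_real \<tau> * b)^(q-m) * (- cnj (of_real \<tau> * b))^(p-m) / (fact m * fact (q-m) * fact (p-m))"
    proof -
      have c: "- cnj (of_real \<tau> * b) = of_real \<tau> * (- cnj b)" by simp
      show ?thesis unfolding e c power_mult_distrib of_real_mult of_real_divide of_real_power by (simp add: field_simps)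
    qed
  qed
  finally show ?thesis unfolding M_def .
qed

lemma vc_prod:
  assumes t: "0 < t" and sp: "s \<le> p" and sq: "s \<le> q"
  shows "vc t (p-s) (q-s) s * sqrt (fact (q-s) * fact (p-s)) * (-1)^(q-s)
     = (-1)^q * (sqrt t^(p+q-2*s) * (1 - sqrt t^2)^s / fact s) * sqrt (fact p * fact q)"
proof -
  have a: "sqrt (fact p / fact (p-s)) * sqrt (fact (p-s)) = sqrt (fact p)"
    by (simp flip: real_sqrt_mult)
  have b: "sqrt (fact q / fact (q-s)) * sqrt (fact (q-s)) = sqrt (fact q)"
    by (simp flip: real_sqrt_mult)
  have c: "sqrt t^(p-s) * sqrt t^(q-s) = sqrt t^(p+q-2*s)"
  proof -
    have "p+q-2*s = (p-s) + (q-s)" using sp sq by auto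
    then show ?thesis by (simp add: power_add)
  qed
  have d: "(t-1)^s * (-1::real)^(q-s) = (-1)^q * (1-t)^s"
  proof -
    have "(t-1)^s = (-1)^s * (1-t)^s" by (simp flip: power_mult_distrib)
    moreover have "(-1::real)^s * (-1)^(q-s) = (-1)^q" using sq by (simp flip: power_add)
    ultimately show ?thesis by (simp add: mult_ac)
  qed
  have e: "sqrt t ^ 2 = t" using t by simp
  have "vc t (p-s) (q-s) s * sqrt (fact (q-s) * fact (p-s)) * (-1)^(q-s)
     = ((t-1)^s * (-1)^(q-s)) / fact s * (sqrt t^(p-s) * sqrt t^(q-s))
       * (sqrt (fact p / fact (p-s)) * sqrt (fact (p-s))) * (sqrt (fact q / fact (q-s)) * sqrt (fact (q-s)))"
    unfolding vc_def powr_half[OF t] using sp sq t by (simp add: real_sqrt_mult mult_ac)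
  also have "\<dots> = (-1)^q * (sqrt t^(p+q-2*s) * (1 - sqrt t^2)^s / fact s) * sqrt (fact p * fact q)"
    unfolding a b c d e by (simp add: real_sqrt_mult)
  finally show ?thesis .
qed

lemma WF_vertigo:
  assumes X: "supp_le n X" and t: "0 < t"
  shows "WF n (vertigo t X) b = of_real (exp ((t-1) * cmod b^2 / 2)) * WF n X (of_real (sqrt t) * b)"
proof -
  define E where "E = exp (- (cmod b ^ 2) / 2)"
  define G where "G s j k p q = of_real (vc t j k s) * X p q * (-1)^k * disp b k j" for s j k p q
  have "WF n (vertigo t X) b = (\<Sum>j\<le>n. \<Sum>k\<le>n. \<Sum>s\<le>n. G s j k (j+s) (k+s))"
    unfolding WF_def vertigo_fin[OF X] G_def by (simp only: sum_distrib_right)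
  also have "\<dots> = (\<Sum>j\<le>n. \<Sum>s\<le>n. \<Sum>k\<le>n. G s j k (j+s) (k+s))"
    by (rule sum.cong[OF refl], rule sum.swap)
  also have "\<dots> = (\<Sum>s\<le>n. \<Sum>j\<le>n. \<Sum>k\<le>n. G s j k (j+s) (k+s))"
    by (rule sum.swap)
  also have "\<dots> = (\<Sum>s\<le>n. \<Sum>p\<le>n. \<Sum>q\<le>n. if s \<le> p \<and> s \<le> q then G s (p-s) (q-s) p q else 0)"
  proof (rule sum.cong[OF refl])
    fix s
    have "(\<Sum>j\<le>n. \<Sum>k\<le>n. G s j k (j+s) (k+s)) = (\<Sum>j\<le>n. \<Sum>q\<le>n. if s \<le> q then G s j (q-s) (j+s) q else 0)"
    proof (rule sum.cong[OF refl])
      fix j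
      show "(\<Sum>k\<le>n. G s j k (j+s) (k+s)) = (\<Sum>q\<le>n. if s \<le> q then G s j (q-s) (j+s) q else 0)"
        by (rule shift_sum[of n "\<lambda>k q. G s j k (j+s) q" s]) (simp add: G_def supp_leD[OF X])
    qed
    also have "\<dots> = (\<Sum>p\<le>n. if s \<le> p then (\<Sum>q\<le>n. if s \<le> q then G s (p-s) (q-s) p q else 0) else 0)"
      by (rule shift_sum[of n "\<lambda>j p. \<Sum>q\<le>n. if s \<le> q then G s j (q-s) p q else 0" s]) (auto intro!: sum.neutral simp: G_def supp_leD[OF X])
    also have "\<dots> = (\<Sum>p\<le>n. \<Sum>q\<le>n. if s \<le> p \<and> s \<le> q then G s (p-s) (q-s) p q else 0)"
      by (intro sum.cong refl) (auto intro!: sum.neutral)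
    finally show "(\<Sum>j\<le>n. \<Sum>k\<le>n. G s j k (j+s) (k+s)) = (\<Sum>p\<le>n. \<Sum>q\<le>n. if s \<le> p \<and> s \<le> q then G s (p-s) (q-s) p q else 0)" .
  qed
  also have "\<dots> = (\<Sum>p\<le>n. \<Sum>s\<le>n. \<Sum>q\<le>n. if s \<le> p \<and> s \<le> q then G s (p-s) (q-s) p q else 0)"
    by (rule sum.swap)
  also have "\<dots> = (\<Sum>p\<le>n. \<Sum>q\<le>n. \<Sum>s\<le>n. if s \<le> p \<and> s \<le> q then G s (p-s) (q-s) p q else 0)"
    by (rule sum.cong[OF refl], rule sum.swap)
  also have "\<dots> = (\<Sum>p\<le>n. \<Sum>q\<le>n. X p q * (-1)^q * of_real (E * sqrt (fact p * fact q)) * dd (of_real (sqrt t) * b) q p)"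
  proof (intro sum.cong refl)
    fix p q assume p: "p \<in> {..n}" and q: "q \<in> {..n}"
    have "(\<Sum>s\<le>n. if s \<le> p \<and> s \<le> q then G s (p-s) (q-s) p q else 0) = (\<Sum>s\<le>min p q. G s (p-s) (q-s) p q)"
      using p q by (intro sum.mono_neutral_cong_right) auto
    also have "\<dots> = (\<Sum>s\<le>min p q. X p q * (-1)^q * of_real (E * sqrt (fact p * fact q)) *
        (of_real (sqrt t^(p+q-2*s) * (1 - sqrt t^2)^s / fact s) * dd b (q-s) (p-s)))"
    proof (rule sum.cong[OF refl])
      fix s assume s: "s \<in> {..min p q}"
      have "G s (p-s) (q-s) p q = X p q * of_real E * of_real (vc t (p-s) (q-s) s * sqrt (fact (q-s) * fact (p-s)) * (-1)^(q-s)) * dd b (q-s) (p-s)"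
        unfolding G_def disp_dd E_def by (simp add: mult_ac)
      also have "\<dots> = X p q * (-1)^q * of_real (E * sqrt (fact p * fact q)) *
        (of_real (sqrt t^(p+q-2*s) * (1 - sqrt t^2)^s / fact s) * dd b (q-s) (p-s))"
        using s by (subst vc_prod[OF t]) (auto simp: mult_ac)
      finally show "G s (p-s) (q-s) p q = X p q * (-1)^q * of_real (E * sqrt (fact p * fact q)) *
        (of_real (sqrt t^(p+q-2*s) * (1 - sqrt t^2)^s / fact s) * dd b (q-s) (p-s))" .
    qed
    also have "\<dots> = X p q * (-1)^q * of_real (E * sqrt (fact p * fact q)) * dd (of_real (sqrt t) * b) q p"
      by (simp only: VI flip: sum_distrib_left)
    finally show "(\<Sum>s\<le>n. if s \<le> p \<and> s \<le> q then G s (p-s) (q-s) p q else 0) = X p q * (-1)^q * of_real (E * sqrt (fact p * fact q)) * dd (of_real (sqrt t) * b) q p" .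
  qed
  also have "\<dots> = of_real (exp ((t-1) * cmod b^2 / 2)) * WF n X (of_real (sqrt t) * b)"
  proof -
    have ee: "exp ((t-1) * cmod b^2 / 2) * exp (- (cmod (of_real (sqrt t) * b) ^ 2) / 2) = E"
      unfolding E_def using t by (simp add: norm_mult power_mult_distrib field_simps flip: exp_add)
    show ?thesis
      unfolding WF_def disp_dd sum_distrib_left
      by (intro sum.cong refl) (simp add: ee[symmetric] mult_ac)
  qed
  finally show ?thesis .
qed

lemma wigner_vertigo:
  assumes X: "supp_le n X" and t: "0 < t"
  shows "wigner (vertigo t X) a = exp (2 * (t-1) * cmod a ^ 2) * wigner X (of_real (sqrt t) * a)"
proof -
  have e1: "(t-1) * cmod (-2*a)^2 / 2 = 2 * (t-1) * cmod a ^ 2"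
    by (simp add: norm_mult power_mult_distrib)
  have e2: "of_real (sqrt t) * (-2*a) = -2 * (of_real (sqrt t) * a)" by simp
  show ?thesis
    unfolding wigner_WF[OF supp_vertigo[OF X]] wigner_WF[OF X] WF_vertigo[OF X t] e1 e2
    by simp
qed

lemma vc_alt: "0 < t \<Longrightarrow> vc t i j k = (t-1)^k / fact k * sqrt t^(i+j) * sqrt (fact (i+k) / fact i) * sqrt (fact (j+k) / fact j)"
  unfolding vc_def by (simp add: powr_half power_add)

lemma sqrt_fact_ratio: "i \<le> m \<Longrightarrow> m \<le> r \<Longrightarrow> sqrt (fact m / fact i) * sqrt (fact r / fact m) = sqrt (fact r / (fact i :: real))"
  by (simp flip: real_sqrt_mult)

lemma vc_comp:
  assumes s: "0 < s" and t: "0 < t"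
  shows "(\<Sum>k\<le>r. vc s i j k * vc t (i+k) (j+k) (r-k)) = vc (s*t) i j r"
proof -
  have "(\<Sum>k\<le>r. vc s i j k * vc t (i+k) (j+k) (r-k)) =
     (\<Sum>k\<le>r. (sqrt (s*t)^(i+j) * sqrt (fact (i+r) / fact i) * sqrt (fact (j+r) / fact j) / fact r) *
        (real (r choose k) * ((s-1)*t)^k * (t-1)^(r-k)))"
  proof (rule sum.cong[OF refl])
    fix k assume k: "k \<in> {..r}"
    have a: "sqrt (fact (i+k) / fact i) * sqrt (fact (i+r) / fact (i+k)) = sqrt (fact (i+r) / (fact i :: real))"
      using k by (intro sqrt_fact_ratio) auto
    have b: "sqrt (fact (j+k) / fact j) * sqrt (fact (j+r) / fact (j+k)) = sqrt (fact (j+r) / (fact j :: real))"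
      using k by (intro sqrt_fact_ratio) auto
    have c: "sqrt t^(i+k+(j+k)) = sqrt t^(i+j) * t^k"
    proof -
      have "i+k+(j+k) = (i+j) + 2*k" by simp
      then have "sqrt t^(i+k+(j+k)) = sqrt t^(i+j) * (sqrt t^2)^k" by (simp only: power_add power_mult)
      then show ?thesis using t by simp
    qed
    have r: "r - k + k = r" using k by auto
    have "vc s i j k * vc t (i+k) (j+k) (r-k) = (s-1)^k * t^k * (t-1)^(r-k) / (fact k * fact (r-k)) * (sqrt s^(i+j) * sqrt t^(i+j))
       * (sqrt (fact (i+k) / fact i) * sqrt (fact (i+r) / fact (i+k))) * (sqrt (fact (j+k) / fact j) * sqrt (fact (j+r) / fact (j+k)))"
      unfolding vc_alt[OF s] vc_alt[OF t] c using k by (simp add: r add.assoc[symmetric] add.commute[of "r-k"] mult_ac)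
    also have "\<dots> = (sqrt (s*t)^(i+j) * sqrt (fact (i+r) / fact i) * sqrt (fact (j+r) / fact j) / fact r) *
        (real (r choose k) * ((s-1)*t)^k * (t-1)^(r-k))"
      unfolding a b power_mult_distrib[of "s-1" t k] using k by (simp add: binomial_fact real_sqrt_mult power_mult_distrib field_simps)
    finally show "vc s i j k * vc t (i+k) (j+k) (r-k) = (sqrt (s*t)^(i+j) * sqrt (fact (i+r) / fact i) * sqrt (fact (j+r) / fact j) / fact r) *
        (real (r choose k) * ((s-1)*t)^k * (t-1)^(r-k))" .
  qed
  also have "\<dots> = (sqrt (s*t)^(i+j) * sqrt (fact (i+r) / fact i) * sqrt (fact (j+r) / fact j) / fact r) * ((s-1)*t + (t-1))^r"
    by (simp only: binomial_ring sum_distrib_left)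
  also have "\<dots> = vc (s*t) i j r"
    unfolding vc_alt[OF mult_pos_pos[OF s t]] by (simp add: algebra_simps)
  finally show ?thesis .
qed

lemma vertigo_comp:
  assumes X: "supp_le n X" and s: "0 < s" and t: "0 < t"
  shows "vertigo s (vertigo t X) = vertigo (s*t) X"
proof (intro ext)
  fix i j
  define F where "F k m = of_real (vc s i j k * vc t (i+k) (j+k) m) * X (i+(k+m)) (j+(k+m))" for k m
  have "vertigo s (vertigo t X) i j = (\<Sum>k\<le>n. \<Sum>m\<le>n. F k m)"
    unfolding vertigo_fin[OF supp_vertigo[OF X]] vertigo_fin[OF X] F_def sum_distrib_left
    by (simp add: mult_ac add.assoc)
  also have "\<dots> = (\<Sum>(k,m)\<in>{..n}\<times>{..n}. F k m)"
    by (simp add: sum.cartesian_product)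
  also have "\<dots> = (\<Sum>(k,m)\<in>{(k,m). k + m \<le> n}. F k m)"
  proof (rule sum.mono_neutral_right)
    show "\<forall>x\<in>{..n} \<times> {..n} - {(k, m). k + m \<le> n}. (case x of (k, m) \<Rightarrow> F k m) = 0"
    proof
      fix x assume x: "x \<in> {..n} \<times> {..n} - {(k, m). k + m \<le> n}"
      obtain k m where km: "x = (k, m)" by fastforce
      have "X (i+(k+m)) (j+(k+m)) = 0" using x km by (intro supp_leD[OF X]) auto
      then show "(case x of (k, m) \<Rightarrow> F k m) = 0" by (simp add: km F_def)
    qed
  qed auto
  also have "\<dots> = (\<Sum>r\<le>n. \<Sum>k\<le>r. F k (r - k))"
    by (rule sum.triangle_reindex_eq)
  also have "\<dots> = (\<Sum>r\<le>n. of_real (vc (s*t) i j r) * X (i+r) (j+r))"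
  proof (rule sum.cong[OF refl])
    fix r
    have "(\<Sum>k\<le>r. F k (r - k)) = (\<Sum>k\<le>r. of_real (vc s i j k * vc t (i+k) (j+k) (r-k)) * X (i+r) (j+r))"
      by (rule sum.cong[OF refl]) (auto simp: F_def)
    also have "\<dots> = of_real (vc (s*t) i j r) * X (i+r) (j+r)"
      by (simp only: of_real_sum[symmetric] sum_distrib_right[symmetric] vc_comp[OF s t])
    finally show "(\<Sum>k\<le>r. F k (r - k)) = of_real (vc (s*t) i j r) * X (i+r) (j+r)" .
  qed
  also have "\<dots> = vertigo (s*t) X i j"
    unfolding vertigo_fin[OF X] ..
  finally show "vertigo s (vertigo t X) i j = vertigo (s*t) X i j" .
qed

lemma vertigo_one:
  assumes X: "supp_le n X"
  shows "vertigo 1 X = X"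
proof (intro ext)
  fix i j
  have "vertigo 1 X i j = (\<Sum>k\<le>n. if k = 0 then X i j else 0)"
    unfolding vertigo_fin[OF X] by (rule sum.cong) (auto simp: vc_def)
  then show "vertigo 1 X i j = X i j" by simp
qed

lemma vertigo_herm:
  assumes X: "supp_le n X" and H: "hermitian X"
  shows "hermitian (vertigo t X)"
  unfolding hermitian_def
proof (intro allI)
  fix i j
  show "vertigo t X j i = cnj (vertigo t X i j)"
    unfolding vertigo_fin[OF X] cnj_sum
  proof (rule sum.cong[OF refl])
    fix k
    have v: "vc t j i k = vc t i j k" by (simp add: vc_def mult_ac)
    have x: "X (j+k) (i+k) = cnj (X (i+k) (j+k))" using H unfolding hermitian_def by blast
    show "complex_of_real (vc t j i k) * X (j + k) (i + k) = cnj (complex_of_real (vc t i j k) * X (i + k) (j + k))"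
      unfolding v x by simp
  qed
qed

lemma supp_lin:
  assumes "supp_le n X" "supp_le n Y"
  shows "supp_le n (\<lambda>i j. a * X i j + b * Y i j)"
  using assms unfolding supp_le_def by auto

lemma vertigo_lin:
  assumes X: "supp_le n X" and Y: "supp_le n Y"
  shows "vertigo t (\<lambda>i j. a * X i j + b * Y i j) = (\<lambda>i j. a * vertigo t X i j + b * vertigo t Y i j)"
  unfolding vertigo_fin[OF supp_lin[OF X Y]] vertigo_fin[OF X] vertigo_fin[OF Y]
proof (intro ext)
  fix i j
  have "a * (\<Sum>k\<le>n. of_real (vc t i j k) * X (i+k) (j+k)) + b * (\<Sum>k\<le>n. of_real (vc t i j k) * Y (i+k) (j+k))
     = (\<Sum>k\<le>n. a * (of_real (vc t i j k) * X (i+k) (j+k)) + b * (of_real (vc t i j k) * Y (i+k) (j+k)))"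
    by (simp only: sum_distrib_left sum.distrib)
  also have "\<dots> = (\<Sum>k\<le>n. of_real (vc t i j k) * (a * X (i+k) (j+k) + b * Y (i+k) (j+k)))"
    by (rule sum.cong[OF refl]) (simp add: algebra_simps)
  finally show "(\<Sum>k\<le>n. of_real (vc t i j k) * (a * X (i+k) (j+k) + b * Y (i+k) (j+k))) =
     a * (\<Sum>k\<le>n. of_real (vc t i j k) * X (i+k) (j+k)) + b * (\<Sum>k\<le>n. of_real (vc t i j k) * Y (i+k) (j+k))" by simp
qed

lemma WF_lin:
  "WF n (\<lambda>i j. a * X i j + b * Y i j) c = a * WF n X c + b * WF n Y c"
  unfolding WF_def by (simp only: sum_distrib_left sum.distrib[symmetric]) (simp add: algebra_simps)

lemma wigner_lin:
  assumes X: "supp_le n X" and Y: "supp_le n Y"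
  shows "wigner (\<lambda>i j. of_real a * X i j + of_real b * Y i j) c = a * wigner X c + b * wigner Y c"
  unfolding wigner_WF[OF supp_lin[OF X Y]] wigner_WF[OF X] wigner_WF[OF Y] WF_lin
  by (simp add: algebra_simps)

lemma mtrace_fin:
  assumes X: "supp_le n X"
  shows "mtrace X = (\<Sum>i\<le>n. X i i)"
  unfolding mtrace_def by (rule suminf_finite) (auto simp: supp_leD[OF X])

definition lc :: "real \<Rightarrow> fmat \<Rightarrow> real \<Rightarrow> fmat \<Rightarrow> fmat" where
  "lc a X b Y = (\<lambda>i j. complex_of_real a * X i j + complex_of_real b * Y i j)"

definition trn :: "nat \<Rightarrow> fmat \<Rightarrow> complex" where
  "trn n X = (\<Sum>i\<le>n. X i i)"

definition Kc :: "nat \<Rightarrow> fmat \<Rightarrow> bool" where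
  "Kc n P \<longleftrightarrow> supp_le n P \<and> hermitian P \<and> (\<forall>a. 0 \<le> wigner P a)"

lemma lc_supp: "supp_le n X \<Longrightarrow> supp_le n Y \<Longrightarrow> supp_le n (lc a X b Y)"
  unfolding lc_def by (rule supp_lin)

lemma lc_herm:
  assumes "hermitian X" "hermitian Y" shows "hermitian (lc a X b Y)"
  unfolding hermitian_def
proof (intro allI)
  fix i j
  have "X j i = cnj (X i j)" "Y j i = cnj (Y i j)" using assms unfolding hermitian_def by blast+
  then show "lc a X b Y j i = cnj (lc a X b Y i j)" unfolding lc_def by simp
qed

lemma lc_tr: "trn n (lc a X b Y) = of_real a * trn n X + of_real b * trn n Y"
  unfolding lc_def trn_def by (simp add: sum.distrib sum_distrib_left)

lemma lc_wigner: "supp_le n X \<Longrightarrow> supp_le n Y \<Longrightarrow> wigner (lc a X b Y) c = a * wigner X c + b * wigner Y c"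
  unfolding lc_def by (rule wigner_lin)

lemma herm_tr: "hermitian P \<Longrightarrow> trn n P = of_real (Re (trn n P))"
proof -
  assume H: "hermitian P"
  have "Im (P i i) = 0" for i
  proof -
    have "P i i = cnj (P i i)" using H unfolding hermitian_def by blast
    then show ?thesis by (metis cnj.sel(2) complex_cnj_cancel_iff neg_equal_zero)
  qed
  then have "Im (trn n P) = 0" unfolding trn_def by (simp add: Im_sum)
  then show ?thesis by (simp add: complex_eq_iff)
qed

lemma Aplus_iff: "A \<in> A_plus n \<longleftrightarrow> supp_le n A \<and> hermitian A \<and> trn n A = 1 \<and> (\<forall>a. 0 \<le> wigner A a)"
  unfolding A_plus_def qstate_supp_def trn_def by auto

lemma extrD:
  assumes "A \<in> extr C" "y \<in> C" "z \<in> C" "0 < l" "l < 1" "A = lc l y (1 - l) z"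
  shows "y = z"
  using assms unfolding extr_def lc_def by blast

lemma cone_neg:
  assumes A: "A \<in> extr (A_plus n)" and P: "Kc n P" and Q: "Kc n Q"
    and APQ: "A = lc 1 P 1 Q" and p: "Re (trn n P) \<le> 0"
  shows "P = lc (Re (trn n P)) A 0 A"
proof -
  define p where "p = Re (trn n P)"
  have Ap: "A \<in> A_plus n" using A unfolding extr_def by blast
  have sA: "supp_le n A" and hA: "hermitian A" and tA: "trn n A = 1" and wA: "\<And>a. 0 \<le> wigner A a"
    using Ap unfolding Aplus_iff by auto
  have sP: "supp_le n P" and hP: "hermitian P" and wP: "\<And>a. 0 \<le> wigner P a" using P unfolding Kc_def by auto
  have sQ: "supp_le n Q" and hQ: "hermitian Q" and wQ: "\<And>a. 0 \<le> wigner Q a" using Q unfolding Kc_def by auto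
  have tP: "trn n P = of_real p" unfolding p_def by (rule herm_tr[OF hP])
  have tQ: "trn n Q = 1 - of_real p"
    using tA unfolding APQ lc_tr tP by (simp add: algebra_simps)
  have p1: "0 < 1 - p" using assms(5) unfolding p_def by simp
  define X where "X = lc (1 / (1 - p)) Q 0 Q"
  define Y where "Y = lc 2 A (-1) X"
  have sX: "supp_le n X" unfolding X_def by (intro lc_supp sQ)
  have sY: "supp_le n Y" unfolding Y_def by (intro lc_supp sA sX)
  have wX: "wigner X a = wigner Q a / (1 - p)" for a
    unfolding X_def lc_wigner[OF sQ sQ] by simp
  have wAa: "wigner A a = wigner P a + wigner Q a" for a
    unfolding APQ lc_wigner[OF sP sQ] by simp
  have XA: "X \<in> A_plus n"
    unfolding Aplus_iff
  proof (intro conjI allI)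
    show "trn n X = 1" unfolding X_def lc_tr tQ using p1 by (simp add: field_simps)
    show "0 \<le> wigner X a" for a unfolding wX using wQ[of a] p1 by simp
  qed (use sX in \<open>auto simp: X_def intro!: lc_herm hQ\<close>)
  have YA: "Y \<in> A_plus n"
    unfolding Aplus_iff
  proof (intro conjI allI)
    show "trn n Y = 1" unfolding Y_def lc_tr tA using XA unfolding Aplus_iff by simp
    show "0 \<le> wigner Y a" for a
    proof -
      have "wigner Y a = 2 * wigner P a + (1 - 2 * p) * wigner X a"
        unfolding Y_def lc_wigner[OF sA sX] wAa using p1 by (simp add: wX field_simps)
      also have "\<dots> \<ge> 0" using wP[of a] wQ[of a] p1 assms(5) unfolding wX p_def
        by (intro add_nonneg_nonneg mult_nonneg_nonneg divide_nonneg_pos) auto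
      finally show ?thesis .
    qed
  qed (use sY XA in \<open>auto simp: Y_def Aplus_iff intro!: lc_herm hA\<close>)
  have e: "A = lc (1/2) Y (1 - 1/2) X"
    unfolding Y_def lc_def by (intro ext) (simp add: algebra_simps)
  have "Y = X" by (rule extrD[OF A YA XA _ _ e]) auto
  then have AX: "A = X"
    using e unfolding lc_def by (auto intro!: ext simp: algebra_simps)
  show ?thesis
  proof (intro ext)
    fix i j
    have "A i j = Q i j / (1 - of_real p)" using AX unfolding X_def lc_def by (simp add: divide_inverse mult.commute)
    then have "Q i j = (1 - of_real p) * A i j" using p1 by (simp add: field_simps)
    moreover have "A i j = P i j + Q i j" using APQ unfolding lc_def by simp
    ultimately show "P i j = lc (Re (trn n P)) A 0 A i j" unfolding lc_def p_def[symmetric] by (simp add: algebra_simps)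
  qed
qed

lemma cone:
  assumes A: "A \<in> extr (A_plus n)" and P: "Kc n P" and Q: "Kc n Q"
    and APQ: "A = lc 1 P 1 Q"
  shows "P = lc (Re (trn n P)) A 0 A"
proof -
  define p where "p = Re (trn n P)"
  have Ap: "A \<in> A_plus n" using A unfolding extr_def by blast
  have sA: "supp_le n A" and hA: "hermitian A" and tA: "trn n A = 1"
    using Ap unfolding Aplus_iff by auto
  have sP: "supp_le n P" and hP: "hermitian P" and wP: "\<And>a. 0 \<le> wigner P a" using P unfolding Kc_def by auto
  have sQ: "supp_le n Q" and hQ: "hermitian Q" and wQ: "\<And>a. 0 \<le> wigner Q a" using Q unfolding Kc_def by auto
  have tP: "trn n P = of_real p" unfolding p_def by (rule herm_tr[OF hP])
  have tQ: "trn n Q = 1 - of_real p"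
    using tA unfolding APQ lc_tr tP by (simp add: algebra_simps)
  have AP: "A i j = P i j + Q i j" for i j using APQ unfolding lc_def by simp
  consider "p \<le> 0" | "1 \<le> p" | "0 < p" "p < 1" by linarith
  then show ?thesis
  proof cases
    case 1
    then show ?thesis using cone_neg[OF A P Q APQ] unfolding p_def by simp
  next
    case 2
    have AQP: "A = lc 1 Q 1 P" using APQ unfolding lc_def by (auto simp: add.commute)
    have q: "Re (trn n Q) = 1 - p" unfolding tQ by simp
    have "Q = lc (Re (trn n Q)) A 0 A" using 2 q by (intro cone_neg[OF A Q P AQP]) simp
    then have "Q i j = (1 - of_real p) * A i j" for i j unfolding q lc_def by (metis add_cancel_right_right mult_zero_left of_real_0 of_real_1 of_real_diff)
    then show ?thesis unfolding lc_def p_def[symmetric] by (intro ext) (simp add: AP algebra_simps)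
  next
    case 3
    define y where "y = lc (1/p) P 0 P"
    define z where "z = lc (1/(1-p)) Q 0 Q"
    have yA: "y \<in> A_plus n" unfolding Aplus_iff
    proof (intro conjI allI)
      show "supp_le n y" unfolding y_def by (intro lc_supp sP)
      show "hermitian y" unfolding y_def by (intro lc_herm hP)
      show "trn n y = 1" unfolding y_def lc_tr tP using 3 by simp
      show "0 \<le> wigner y a" for a unfolding y_def lc_wigner[OF sP sP] using wP[of a] 3 by simp
    qed
    have zA: "z \<in> A_plus n" unfolding Aplus_iff
    proof (intro conjI allI)
      show "supp_le n z" unfolding z_def by (intro lc_supp sQ)
      show "hermitian z" unfolding z_def by (intro lc_herm hQ)
      show "trn n z = 1" unfolding z_def lc_tr tQ using 3 by (simp add: field_simps)
      show "0 \<le> wigner z a" for a unfolding z_def lc_wigner[OF sQ sQ] using wQ[of a] 3 by simp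
    qed
    have e: "A = lc p y (1 - p) z"
      unfolding y_def z_def lc_def using 3 by (intro ext) (simp add: AP field_simps)
    have yz: "y = z" by (rule extrD[OF A yA zA _ _ e]) (use 3 in auto)
    have "A i j = y i j" for i j using e unfolding yz lc_def by (simp add: algebra_simps)
    then show ?thesis unfolding y_def lc_def p_def[symmetric] using 3 by (intro ext) (simp add: field_simps)
  qed
qed

lemma sum_if_eq:
  assumes "finite S" "i \<in> S"
  shows "(\<Sum>j\<in>S. if i = j then x else y) = x + (real (card S) - 1) * (y::real)"
proof -
  have "(\<Sum>j\<in>S. if i = j then x else y) = (\<Sum>j\<in>S. y + (if i = j then x - y else 0))"
    by (rule sum.cong) auto
  also have "\<dots> = real (card S) * y + (x - y)"
    using assms by (simp add: sum.distrib)
  finally show ?thesis by (simp add: algebra_simps)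
qed

lemma diag_dom_psd:
  fixes M :: fmat
  assumes M: "supp_le n M" and real: "\<And>i. Im (M i i) = 0"
    and diag: "\<And>i. i \<le> n \<Longrightarrow> real n * B \<le> Re (M i i)"
    and off: "\<And>i j. i \<noteq> j \<Longrightarrow> cmod (M i j) \<le> B" and B: "0 \<le> B"
  shows "0 \<le> Re (\<Sum>i\<le>N. \<Sum>j\<le>N. cnj (v i) * M i j * v j)"
proof -
  define S where "S = {..min N n}"
  define a where "a i = cmod (v i) ^ 2" for i
  have fS: "finite S" and cS: "card S \<le> n + 1" unfolding S_def by auto
  have red: "(\<Sum>i\<le>N. \<Sum>j\<le>N. cnj (v i) * M i j * v j) = (\<Sum>i\<in>S. \<Sum>j\<in>S. cnj (v i) * M i j * v j)"
  proof -
    have "(\<Sum>i\<le>N. \<Sum>j\<le>N. cnj (v i) * M i j * v j) = (\<Sum>i\<in>S. \<Sum>j\<le>N. cnj (v i) * M i j * v j)"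
      by (rule sum.mono_neutral_right) (auto simp: S_def supp_leD[OF M] intro!: sum.neutral)
    also have "\<dots> = (\<Sum>i\<in>S. \<Sum>j\<in>S. cnj (v i) * M i j * v j)"
      by (intro sum.cong refl sum.mono_neutral_right) (auto simp: S_def supp_leD[OF M])
    finally show ?thesis .
  qed
  define g where "g i j = (if i = j then real n * B * a i / 2 else - B * a i / 2)" for i j
  have lb: "g i j + g j i \<le> Re (cnj (v i) * M i j * v j)" if "i \<in> S" "j \<in> S" for i j
  proof (cases "i = j")
    case True
    have "Re (cnj (v i) * M i i * v i) = Re (M i i) * a i"
    proof -
      have "M i i = of_real (Re (M i i))" using real[of i] by (simp add: complex_eq_iff)
      then have "cnj (v i) * M i i * v i = of_real (Re (M i i) * a i)"
        unfolding a_def by (metis (no_types, lifting) complex_norm_square mult.commute mult.left_commute of_real_mult of_real_power)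
      then show ?thesis by simp
    qed
    moreover have "real n * B \<le> Re (M i i)" using that diag by (auto simp: S_def)
    moreover have "0 \<le> a i" unfolding a_def by simp
    ultimately have "real n * B * a i \<le> Re (cnj (v i) * M i i * v i)" by (simp add: mult_right_mono)
    then show ?thesis using True unfolding g_def by (simp add: mult_ac)
  next
    case False
    have "- Re (cnj (v i) * M i j * v j) \<le> cmod (cnj (v i) * M i j * v j)"
      using abs_Re_le_cmod[of "cnj (v i) * M i j * v j"] by linarith
    also have "\<dots> = cmod (v i) * cmod (M i j) * cmod (v j)" by (simp add: norm_mult)
    also have "\<dots> \<le> cmod (v i) * B * cmod (v j)"
      using off[OF False] by (intro mult_right_mono mult_left_mono) auto
    also have "\<dots> \<le> B * (a i + a j) / 2"
    proof -
      have "2 * (cmod (v i) * cmod (v j)) \<le> cmod (v i)^2 + cmod (v j)^2"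
        using sum_squares_bound[of "cmod (v i)" "cmod (v j)"] by (simp add: mult_ac)
      then have "B * (2 * (cmod (v i) * cmod (v j))) \<le> B * (cmod (v i)^2 + cmod (v j)^2)"
        using B by (rule mult_left_mono)
      then show ?thesis unfolding a_def by (simp add: algebra_simps)
    qed
    finally show ?thesis using False unfolding g_def by (simp add: algebra_simps)
  qed
  have "(\<Sum>i\<in>S. \<Sum>j\<in>S. g i j + g j i) \<le> (\<Sum>i\<in>S. \<Sum>j\<in>S. Re (cnj (v i) * M i j * v j))"
    using lb by (intro sum_mono) auto
  moreover have "(\<Sum>i\<in>S. \<Sum>j\<in>S. g i j + g j i) = 2 * (\<Sum>i\<in>S. \<Sum>j\<in>S. g i j)"
    by (simp add: sum.distrib sum.swap[of "\<lambda>i j. g j i"])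
  moreover have "0 \<le> (\<Sum>i\<in>S. \<Sum>j\<in>S. g i j)"
  proof (rule sum_nonneg)
    fix i assume i: "i \<in> S"
    have "(\<Sum>j\<in>S. g i j) = real n * B * a i / 2 + (real (card S) - 1) * (- B * a i / 2)"
      unfolding g_def by (rule sum_if_eq[OF fS i])
    also have "\<dots> = B * a i / 2 * (real n + 1 - real (card S))" by (simp add: field_simps)
    also have "\<dots> \<ge> 0" using B cS by (intro mult_nonneg_nonneg) (auto simp: a_def)
    finally show "0 \<le> (\<Sum>j\<in>S. g i j)" .
  qed
  ultimately show ?thesis unfolding red by (simp add: Re_sum)
qed

lemma vc_nonneg: "1 \<le> t \<Longrightarrow> 0 \<le> vc t i j s"
  by (simp add: vc_alt)

lemma sqrt_fact_le: "i + s \<le> n \<Longrightarrow> sqrt (fact (i+s) / fact i) \<le> sqrt (fact n :: real)"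
proof -
  assume a: "i + s \<le> n"
  have "fact (i+s) / fact i \<le> (fact (i+s) :: real)"
    by (simp add: divide_le_eq fact_ge_1 mult_le_cancel_left1 fact_gt_zero)
  also have "\<dots> \<le> fact n" using a by (rule fact_mono)
  finally show ?thesis by simp
qed

lemma vc_le:
  assumes t: "1 \<le> t" and a: "i + s \<le> n" "j + s \<le> n"
  shows "vc t i j s \<le> fact n * sqrt t ^ (i + j + 2 * s)"
proof -
  have t0: "0 < t" using t by simp
  have "(t-1)^s / fact s \<le> t^s"
  proof -
    have "(t-1)^s / fact s \<le> (t-1)^s" using t by (simp add: divide_le_eq fact_ge_1 mult_le_cancel_left1)
    also have "\<dots> \<le> t^s" using t by (intro power_mono) auto
    finally show ?thesis .
  qed
  moreover have "t^s = sqrt t ^ (2*s)" using t by (simp add: power_mult)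
  ultimately have h1: "(t-1)^s / fact s \<le> sqrt t ^ (2*s)" by simp
  have h2: "sqrt (fact (i+s) / fact i) * sqrt (fact (j+s) / fact j) \<le> sqrt (fact n) * sqrt (fact n :: real)"
    using sqrt_fact_le[OF a(1)] sqrt_fact_le[OF a(2)] by (intro mult_mono) auto
  have "vc t i j s = ((t-1)^s / fact s) * sqrt t^(i+j) * (sqrt (fact (i+s) / fact i) * sqrt (fact (j+s) / fact j))"
    unfolding vc_alt[OF t0] by (simp add: mult_ac)
  also have "\<dots> \<le> sqrt t ^ (2*s) * sqrt t^(i+j) * (sqrt (fact n) * sqrt (fact n))"
    by (rule mult_mono[OF mult_right_mono[OF h1] h2]) (use t in auto)
  also have "\<dots> = fact n * sqrt t ^ (i + j + 2 * s)" by (simp add: power_add mult_ac)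
  finally show ?thesis .
qed

lemma pow_le_div:
  fixes \<tau> :: real
  assumes "1 \<le> \<tau>" "k + 1 \<le> m"
  shows "\<tau> ^ k \<le> \<tau> ^ m / \<tau>"
proof -
  have "\<tau> ^ (k + 1) \<le> \<tau> ^ m" using assms by (intro power_increasing) auto
  then show ?thesis using assms by (simp add: field_simps)
qed

definition amax :: "nat \<Rightarrow> fmat \<Rightarrow> real" where
  "amax n A = (\<Sum>p\<le>n. \<Sum>q\<le>n. cmod (A p q))"

lemma amax_ge:
  assumes A: "supp_le n A"
  shows "cmod (A p q) \<le> amax n A"
proof (cases "p \<le> n \<and> q \<le> n")
  case True
  have "cmod (A p q) \<le> (\<Sum>q\<le>n. cmod (A p q))"
    using True by (intro member_le_sum) auto
  also have "\<dots> \<le> amax n A" unfolding amax_def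
    using True by (intro member_le_sum[of p "{..n}" "\<lambda>p. \<Sum>q\<le>n. cmod (A p q)"]) (auto intro: sum_nonneg)
  finally show ?thesis .
next
  case False
  then have "A p q = 0" by (intro supp_leD[OF A]) auto
  then show ?thesis unfolding amax_def by (simp add: sum_nonneg)
qed

lemma term_bound:
  assumes t: "1 \<le> t" and A: "supp_le n A"
    and c: "i + s \<le> n \<and> j + s \<le> n \<longrightarrow> i + j + 2 * s + 1 \<le> 2 * n"
  shows "cmod (of_real (vc t i j s) * A (i+s) (j+s)) \<le> fact n * amax n A * (sqrt t ^ (2*n) / sqrt t)"
proof (cases "i + s \<le> n \<and> j + s \<le> n")
  case True
  have "cmod (of_real (vc t i j s) * A (i+s) (j+s)) = vc t i j s * cmod (A (i+s) (j+s))"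
    using vc_nonneg[OF t] by (simp add: norm_mult)
  also have "\<dots> \<le> (fact n * (sqrt t ^ (2*n) / sqrt t)) * amax n A"
  proof (intro mult_mono)
    have "vc t i j s \<le> fact n * sqrt t ^ (i + j + 2 * s)" using True by (intro vc_le[OF t]) auto
    also have "\<dots> \<le> fact n * (sqrt t ^ (2*n) / sqrt t)"
      using True c t by (intro mult_left_mono pow_le_div) auto
    finally show "vc t i j s \<le> fact n * (sqrt t ^ (2*n) / sqrt t)" .
    show "cmod (A (i+s) (j+s)) \<le> amax n A" by (rule amax_ge[OF A])
    show "0 \<le> fact n * (sqrt t ^ (2*n) / sqrt t)" using t by simp
  qed simp
  finally show ?thesis by (simp add: mult_ac)
next
  case False
  then have "A (i+s) (j+s) = 0" by (intro supp_leD[OF A]) auto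
  moreover have "0 \<le> amax n A" unfolding amax_def by (simp add: sum_nonneg)
  ultimately show ?thesis using t by simp
qed

lemma off_bound:
  assumes t: "1 \<le> t" and A: "supp_le n A" and ij: "i \<noteq> j"
  shows "cmod (vertigo t A i j) \<le> real (n+1) * (fact n * amax n A * (sqrt t ^ (2*n) / sqrt t))"
proof -
  have "cmod (vertigo t A i j) \<le> (\<Sum>s\<le>n. cmod (of_real (vc t i j s) * A (i+s) (j+s)))"
    unfolding vertigo_fin[OF A] by (rule norm_sum)
  also have "\<dots> \<le> (\<Sum>s\<le>n. fact n * amax n A * (sqrt t ^ (2*n) / sqrt t))"
    using ij by (intro sum_mono term_bound[OF t A]) auto
  finally show ?thesis by simp
qed

lemma herm_diag_real: "hermitian A \<Longrightarrow> Im (A i i) = 0"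
proof -
  assume H: "hermitian A"
  have "A i i = cnj (A i i)" using H unfolding hermitian_def by blast
  then show ?thesis by (metis cnj.sel(2) complex_cnj_cancel_iff neg_equal_zero)
qed

lemma vertigo_diag_real:
  assumes A: "supp_le n A" and H: "hermitian A"
  shows "Im (vertigo t A i i) = 0"
  unfolding vertigo_fin[OF A] Im_sum using herm_diag_real[OF H] by simp

lemma vc_main:
  assumes t: "2 \<le> t" and i: "i \<le> n"
  shows "sqrt t ^ (2*n) / 2^n \<le> vc t i i (n-i)"
proof -
  have t0: "0 < t" using t by simp
  have V: "vc t i i (n-i) = (t-1)^(n-i) * sqrt t ^ (2*i) * (fact n / (fact i * fact (n-i)))"
  proof -
    have sq: "sqrt (fact n / fact i) * sqrt (fact n / fact i) = (fact n / fact i :: real)" by simp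
    have "vc t i i (n-i) = (t-1)^(n-i) / fact (n-i) * sqrt t^(2*i) * (sqrt (fact n / fact i) * sqrt (fact n / fact i))"
      unfolding vc_alt[OF t0] using i by (simp only: mult_2 le_add_diff_inverse mult.assoc)
    then have "vc t i i (n-i) = (t-1)^(n-i) / fact (n-i) * sqrt t^(2*i) * (fact n / fact i)" unfolding sq .
    then show ?thesis by (simp add: field_simps)
  qed
  have C: "1 \<le> (fact n / (fact i * fact (n-i)) :: real)"
  proof -
    have "(fact n / (fact i * fact (n-i)) :: real) = real (n choose i)" using i by (simp add: binomial_fact)
    moreover have "1 \<le> n choose i" using i by (simp add: Suc_leI zero_less_binomial)
    ultimately show ?thesis by simp
  qed
  have "sqrt t ^ (2*n) / 2^n \<le> sqrt t ^ (2*n) / 2^(n-i)"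
    by (intro divide_left_mono power_increasing) auto
  also have "\<dots> = (t/2)^(n-i) * sqrt t ^ (2*i)"
  proof -
    have "t^(n-i) = sqrt t ^ (2*(n-i))" using t0 by (simp add: power_mult)
    moreover have "2*(n-i) + 2*i = 2*n" using i by simp
    ultimately show ?thesis by (simp add: power_divide field_simps flip: power_add)
  qed
  also have "\<dots> \<le> (t-1)^(n-i) * sqrt t ^ (2*i)"
    using t by (intro mult_right_mono power_mono) auto
  also have "\<dots> \<le> (t-1)^(n-i) * sqrt t ^ (2*i) * (fact n / (fact i * fact (n-i)))"
  proof -
    have "0 \<le> (t-1)^(n-i) * sqrt t ^ (2*i)" using t by simp
    from mult_left_mono[OF C this] show ?thesis by simp
  qed
  finally show ?thesis unfolding V .
qed

lemma diag_bound:
  assumes t: "2 \<le> t" and A: "supp_le n A" and H: "hermitian A" and i: "i \<le> n" and Ann: "0 \<le> Re (A n n)"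
  shows "sqrt t ^ (2*n) / 2^n * Re (A n n) - real (n+1) * (fact n * amax n A * (sqrt t ^ (2*n) / sqrt t)) \<le> Re (vertigo t A i i)"
proof -
  define T where "T s = of_real (vc t i i s) * A (i+s) (i+s)" for s
  define K where "K = fact n * amax n A * (sqrt t ^ (2*n) / sqrt t)"
  have t1: "1 \<le> t" using t by simp
  have K0: "0 \<le> K" unfolding K_def amax_def using t by (simp add: sum_nonneg)
  have ni: "n - i \<in> {..n}" by simp
  have V: "vertigo t A i i = T (n-i) + (\<Sum>s\<in>{..n} - {n-i}. T s)"
    unfolding vertigo_fin[OF A] T_def by (rule sum.remove[OF finite_atMost ni])
  have T1: "Re (T (n-i)) = vc t i i (n-i) * Re (A n n)"
    unfolding T_def using i by simp
  have "cmod (\<Sum>s\<in>{..n} - {n-i}. T s) \<le> (\<Sum>s\<in>{..n} - {n-i}. cmod (T s))" by (rule norm_sum)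
  also have "\<dots> \<le> (\<Sum>s\<in>{..n} - {n-i}. K)"
    unfolding T_def K_def by (intro sum_mono term_bound[OF t1 A]) auto
  also have "\<dots> \<le> real (n+1) * K"
  proof -
    have "card ({..n} - {n-i}) \<le> n + 1" using ni by (simp add: card_Diff_singleton)
    then show ?thesis using K0 by (simp add: mult_right_mono)
  qed
  finally have R: "- (real (n+1) * K) \<le> Re (\<Sum>s\<in>{..n} - {n-i}. T s)"
    using abs_Re_le_cmod[of "\<Sum>s\<in>{..n} - {n-i}. T s"] by linarith
  have "sqrt t ^ (2*n) / 2^n * Re (A n n) \<le> vc t i i (n-i) * Re (A n n)"
    by (intro mult_right_mono vc_main[OF t i] Ann)
  then show ?thesis unfolding V K_def[symmetric] using T1 R by simp
qed

lemma state_herm: "is_state y \<Longrightarrow> hermitian y"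
  unfolding is_state_def by blast

lemma state_psd: "is_state y \<Longrightarrow> 0 \<le> Re (\<Sum>i\<le>N. \<Sum>j\<le>N. cnj (v i) * y i j * v j)"
  unfolding is_state_def by blast

lemma state_diag_nonneg:
  assumes y: "is_state y"
  shows "0 \<le> Re (y i i)"
proof -
  have "0 \<le> Re (\<Sum>a\<le>i. \<Sum>b\<le>i. cnj (if a = i then 1 else 0) * y a b * (if b = i then 1 else 0))"
    by (rule state_psd[OF y])
  also have "(\<Sum>a\<le>i. \<Sum>b\<le>i. cnj (if a = i then 1 else 0) * y a b * (if b = i then 1 else 0)) = y i i"
  proof -
    have "\<And>a b. cnj (if a = i then 1 else 0) * y a b * (if b = i then 1 else 0) = (if a = i then (if b = i then y i i else 0) else 0)"
      by auto
    moreover have "\<And>a. (\<Sum>b\<le>i. if a = i then (if b = i then y i i else 0) else 0) = (if a = i then y i i else (0::complex))"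
      by simp
    ultimately show ?thesis by simp
  qed
  finally show ?thesis .
qed

lemma psd_zero_row:
  assumes y: "is_state y" and yii: "y i i = 0"
  shows "y i j = 0"
proof (rule ccontr)
  assume nz: "y i j \<noteq> 0"
  then have ij: "i \<noteq> j" using yii by auto
  have H: "y j i = cnj (y i j)" using state_herm[OF y] unfolding hermitian_def by blast
  define r where "r = (Re (y j j) + 1) / (2 * cmod (y i j) ^ 2)"
  define v where "v k = (if k = i then - of_real r * y i j else if k = j then 1 else 0)" for k
  define N where "N = max i j"
  define f where "f a b = cnj (v a) * y a b * v b" for a b
  have red: "(\<Sum>a\<le>N. \<Sum>b\<le>N. f a b) = (\<Sum>a\<in>{i,j}. \<Sum>b\<in>{i,j}. f a b)"
  proof -
    have "(\<Sum>a\<le>N. \<Sum>b\<le>N. f a b) = (\<Sum>a\<in>{i,j}. \<Sum>b\<le>N. f a b)"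
      by (rule sum.mono_neutral_right) (auto simp: N_def f_def v_def)
    also have "\<dots> = (\<Sum>a\<in>{i,j}. \<Sum>b\<in>{i,j}. f a b)"
      by (intro sum.cong refl sum.mono_neutral_right) (auto simp: N_def f_def v_def)
    finally show ?thesis .
  qed
  have sq: "cnj (y i j) * y i j = of_real (cmod (y i j) ^ 2)"
    using complex_norm_square[of "y i j"] by (simp add: mult.commute)
  have "(\<Sum>a\<in>{i,j}. \<Sum>b\<in>{i,j}. f a b) = - of_real (2 * r * cmod (y i j) ^ 2) + y j j"
  proof -
    have sq': "(complex_of_real (cmod (y i j)))^2 = y i j * cnj (y i j)"
      using complex_norm_square[of "y i j"] by simp
    show ?thesis using ij unfolding f_def v_def by (simp add: yii H algebra_simps sq')
  qed
  then have "Re (\<Sum>a\<le>N. \<Sum>b\<le>N. f a b) = - (2 * r * cmod (y i j) ^ 2) + Re (y j j)"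
    unfolding red by simp
  also have "2 * r * cmod (y i j) ^ 2 = Re (y j j) + 1"
    unfolding r_def using nz by (simp add: field_simps)
  finally have "Re (\<Sum>a\<le>N. \<Sum>b\<le>N. f a b) = -1" by simp
  moreover have "0 \<le> Re (\<Sum>a\<le>N. \<Sum>b\<le>N. f a b)" unfolding f_def by (rule state_psd[OF y])
  ultimately show False by simp
qed

lemma supp_from_mix:
  assumes y: "is_state y" and z: "is_state z" and l: "0 < l" "l < 1"
    and r: "supp_le n \<rho>" and mix: "\<rho> = (\<lambda>i j. complex_of_real l * y i j + complex_of_real (1 - l) * z i j)"
  shows "supp_le n y"
proof -
  have row: "y i j = 0" if i: "n < i" for i j
  proof -
    have "\<rho> i i = 0" using supp_leD[OF r] i by auto
    then have "of_real l * y i i + of_real (1 - l) * z i i = 0" using mix by metis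
    then have "Re (of_real l * y i i + of_real (1 - l) * z i i) = 0" by simp
    then have "l * Re (y i i) + (1 - l) * Re (z i i) = 0" by simp
    moreover have "0 \<le> Re (y i i)" "0 \<le> Re (z i i)" using state_diag_nonneg y z by auto
    ultimately have "Re (y i i) = 0" using l
      by (smt (verit, ccfv_SIG) mult_nonneg_nonneg mult_pos_pos)
    moreover have "Im (y i i) = 0" by (rule herm_diag_real[OF state_herm[OF y]])
    ultimately have "y i i = 0" by (simp add: complex_eq_iff)
    then show ?thesis by (rule psd_zero_row[OF y])
  qed
  show ?thesis unfolding supp_le_def
  proof (intro allI impI)
    fix i j assume "n < i \<or> n < j"
    then show "y i j = 0"
    proof
      assume "n < i" then show ?thesis by (rule row)
    next
      assume "n < j"
      then have "y j i = 0" by (rule row)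
      moreover have "y i j = cnj (y j i)" using state_herm[OF y] unfolding hermitian_def by blast
      ultimately show ?thesis by simp
    qed
  qed
qed

lemma state_trn:
  assumes y: "is_state y" and s: "supp_le n y"
  shows "trn n y = 1"
proof -
  have "(\<lambda>i. y i i) sums 1" using y unfolding is_state_def by blast
  moreover have "(\<lambda>i. y i i) sums (\<Sum>i\<le>n. y i i)"
    by (rule sums_finite) (auto simp: supp_leD[OF s])
  ultimately show ?thesis unfolding trn_def by (simp add: sums_unique2)
qed

lemma vertigo_lc:
  assumes "supp_le n X" "supp_le n Y"
  shows "vertigo t (lc a X b Y) = lc a (vertigo t X) b (vertigo t Y)"
  unfolding lc_def by (rule vertigo_lin[OF assms])

lemma Dplus_state: "y \<in> D_plus \<Longrightarrow> is_state y"
  unfolding D_plus_def by blast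

lemma Dplus_wig: "y \<in> D_plus \<Longrightarrow> 0 \<le> wigner y a"
  unfolding D_plus_def by blast

lemma key_part:
  assumes A: "A \<in> extr (A_plus n)" and t: "0 < t" and c: "0 < c"
    and trV: "trn n (vertigo t A) = of_real c"
    and rho: "\<rho> = lc (1/c) (vertigo t A) 0 (vertigo t A)"
    and y: "y \<in> D_plus" and z: "z \<in> D_plus" and l: "0 < l" "l < 1"
    and mix: "\<rho> = (\<lambda>i j. complex_of_real l * y i j + complex_of_real (1 - l) * z i j)"
  shows "y = \<rho>"
proof -
  have Ap: "A \<in> A_plus n" using A unfolding extr_def by blast
  have sA: "supp_le n A" using Ap unfolding Aplus_iff by blast
  define V where "V = vertigo t A"
  have sV: "supp_le n V" unfolding V_def by (rule supp_vertigo[OF sA])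
  have srho: "supp_le n \<rho>" unfolding rho V_def[symmetric] by (intro lc_supp sV)
  have ys: "is_state y" and zs: "is_state z" using y z by (auto intro: Dplus_state)
  have sy: "supp_le n y" by (rule supp_from_mix[OF ys zs l srho mix])
  have mix': "\<rho> = (\<lambda>i j. complex_of_real (1 - l) * z i j + complex_of_real (1 - (1 - l)) * y i j)"
    unfolding mix by (auto simp: add.commute)
  have sz: "supp_le n z" by (rule supp_from_mix[OF zs ys _ _ srho mix']) (use l in auto)
  define s where "s = 1 / t"
  have s0: "0 < s" unfolding s_def using t by simp
  have st: "s * t = 1" "t * s = 1" unfolding s_def using t by auto
  define By where "By = vertigo s y"
  define Bz where "Bz = vertigo s z"
  have sBy: "supp_le n By" unfolding By_def by (rule supp_vertigo[OF sy])
  have sBz: "supp_le n Bz" unfolding Bz_def by (rule supp_vertigo[OF sz])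
  define P where "P = lc (c * l) By 0 By"
  define Q where "Q = lc (c * (1 - l)) Bz 0 Bz"
  have VV: "vertigo s V = A" unfolding V_def vertigo_comp[OF sA s0 t] st by (rule vertigo_one[OF sA])
  have vs1: "vertigo s \<rho> = lc (1/c) A 0 A"
    unfolding rho V_def[symmetric] vertigo_lc[OF sV sV] VV ..
  have rl: "\<rho> = lc l y (1 - l) z" unfolding mix lc_def ..
  have vs2: "vertigo s \<rho> = lc l By (1 - l) Bz"
    unfolding rl vertigo_lc[OF sy sz] By_def Bz_def ..
  have APQ: "A = lc 1 P 1 Q"
  proof (intro ext)
    fix i j
    have "lc (1/c) A 0 A i j = lc l By (1 - l) Bz i j" using vs1 vs2 by simp
    then have "of_real (1/c) * A i j = of_real l * By i j + of_real (1 - l) * Bz i j" unfolding lc_def by simp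
    then have "A i j = of_real c * (of_real l * By i j + of_real (1 - l) * Bz i j)"
      using c by (simp add: field_simps)
    then show "A i j = lc 1 P 1 Q i j" unfolding P_def Q_def lc_def by (simp add: algebra_simps)
  qed
  have KP: "Kc n P" unfolding Kc_def
  proof (intro conjI allI)
    show "supp_le n P" unfolding P_def by (intro lc_supp sBy)
    show "hermitian P" unfolding P_def By_def by (intro lc_herm vertigo_herm[OF sy] state_herm[OF ys])
    show "0 \<le> wigner P a" for a
      unfolding P_def lc_wigner[OF sBy sBy] unfolding By_def wigner_vertigo[OF sy s0]
      using c l Dplus_wig[OF y] by simp
  qed
  have KQ: "Kc n Q" unfolding Kc_def
  proof (intro conjI allI)
    show "supp_le n Q" unfolding Q_def by (intro lc_supp sBz)
    show "hermitian Q" unfolding Q_def Bz_def by (intro lc_herm vertigo_herm[OF sz] state_herm[OF zs])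
    show "0 \<le> wigner Q a" for a
      unfolding Q_def lc_wigner[OF sBz sBz] unfolding Bz_def wigner_vertigo[OF sz s0]
      using c l Dplus_wig[OF z] by simp
  qed
  define p where "p = Re (trn n P)"
  have PA: "P = lc p A 0 A" unfolding p_def by (rule cone[OF A KP KQ APQ])
  have vtP: "vertigo t P = lc (c * l) y 0 y"
    unfolding P_def vertigo_lc[OF sBy sBy] unfolding By_def vertigo_comp[OF sy t s0] st vertigo_one[OF sy] ..
  have vtA: "vertigo t (lc p A 0 A) = lc p V 0 V"
    unfolding vertigo_lc[OF sA sA] V_def ..
  have eq: "of_real (c * l) * y i j = of_real p * V i j" for i j
  proof -
    have "lc (c * l) y 0 y i j = lc p V 0 V i j" using vtP vtA PA by simp
    then show ?thesis unfolding lc_def by simp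
  qed
  have ty: "trn n y = 1" by (rule state_trn[OF ys sy])
  have tV: "trn n V = of_real c" using trV unfolding V_def .
  have "of_real (c * l) * trn n y = of_real p * trn n V"
    unfolding trn_def sum_distrib_left using eq by simp
  then have "c * l = p * c" unfolding ty tV by (metis mult.right_neutral of_real_eq_iff of_real_mult)
  then have pl: "p = l" using c by simp
  show "y = \<rho>"
  proof (intro ext)
    fix i j
    have "y i j = V i j / of_real c" using eq[of i j] l c unfolding pl by (simp add: field_simps)
    then show "y i j = \<rho> i j" unfolding rho V_def[symmetric] lc_def by (simp add: divide_inverse mult.commute)
  qed
qed

lemma extr_part:
  assumes A: "A \<in> extr (A_plus n)" and t: "0 < t" and c: "0 < c"
    and trV: "trn n (vertigo t A) = of_real c"
    and rho: "\<rho> = lc (1/c) (vertigo t A) 0 (vertigo t A)" and rD: "\<rho> \<in> D_plus"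
  shows "\<rho> \<in> extr D_plus"
  unfolding extr_def
proof (intro CollectI conjI allI impI rD)
  fix y z l assume y: "y \<in> D_plus" and z: "z \<in> D_plus" and l: "0 < l" "l < 1"
    and mix: "\<rho> = (\<lambda>i j. complex_of_real l * y i j + complex_of_real (1 - l) * z i j)"
  have "y = \<rho>" by (rule key_part[OF A t c trV rho y z l mix])
  moreover have "z = \<rho>"
  proof (rule key_part[OF A t c trV rho z y])
    show "\<rho> = (\<lambda>i j. complex_of_real (1 - l) * z i j + complex_of_real (1 - (1 - l)) * y i j)"
      unfolding mix by (auto simp: add.commute)
  qed (use l in auto)
  ultimately show "y = z" by simp
qed

theorem theorem3:
  fixes n :: nat and A :: fmat
  assumes "A \<in> extr (A_plus n)"
    and "0 < Re (A n n)"
  shows "\<exists>t0>0. \<forall>t\<ge>t0. vertigo_norm t A \<in> extr (D_plus_n n) \<and> vertigo_norm t A \<in> extr D_plus"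
proof -
  note Ae = assms(1)
  have Ap: "A \<in> A_plus n" using Ae unfolding extr_def by blast
  have sA: "supp_le n A" and hA: "hermitian A" and wA: "\<And>a. 0 \<le> wigner A a"
    using Ap unfolding Aplus_iff by auto
  define Ann where "Ann = Re (A n n)"
  have Ann0: "0 < Ann" unfolding Ann_def using assms(2) .
  define Am where "Am = amax n A"
  have Am0: "0 \<le> Am" unfolding Am_def amax_def by (simp add: sum_nonneg)
  define D where "D = 2^n * real (n+2) * real (n+1) * fact n * Am"
  define C where "C = D / Ann"
  define t0 where "t0 = max 2 (C^2)"
  have "0 < t0" unfolding t0_def by simp
  moreover have "\<forall>t\<ge>t0. vertigo_norm t A \<in> extr (D_plus_n n) \<and> vertigo_norm t A \<in> extr D_plus"
  proof (intro allI impI)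
    fix t assume tt: "t0 \<le> t"
    have t2: "2 \<le> t" using tt unfolding t0_def by simp
    have tp: "0 < t" and t1: "1 \<le> t" using t2 by auto
    define \<tau> where "\<tau> = sqrt t"
    have \<tau>1: "1 \<le> \<tau>" unfolding \<tau>_def using t1 by simp
    have \<tau>C: "C \<le> \<tau>"
    proof -
      have "C^2 \<le> t" using tt unfolding t0_def by simp
      then have "sqrt (C^2) \<le> sqrt t" by (rule real_sqrt_le_mono)
      then show ?thesis unfolding \<tau>_def by simp
    qed
    define K where "K = fact n * Am * (\<tau> ^ (2*n) / \<tau>)"
    define B where "B = real (n+1) * K"
    define M where "M = \<tau> ^ (2*n) / 2^n * Ann"
    have B0: "0 \<le> B" unfolding B_def K_def using Am0 \<tau>1 by simp
    have M0: "0 < M" unfolding M_def using Ann0 \<tau>1 by simp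
    have MB: "real (n+2) * B \<le> M"
    proof -
      have DA: "D \<le> \<tau> * Ann" using \<tau>C Ann0 unfolding C_def by (simp add: divide_le_eq mult.commute)
      have F0: "0 \<le> \<tau> ^ (2*n) / (\<tau> * 2^n)" using \<tau>1 by simp
      have "real (n+2) * B = D * (\<tau> ^ (2*n) / (\<tau> * 2^n))"
        unfolding B_def K_def D_def using \<tau>1 by (simp add: field_simps)
      also have "\<dots> \<le> (\<tau> * Ann) * (\<tau> ^ (2*n) / (\<tau> * 2^n))" using DA F0 by (rule mult_right_mono)
      also have "\<dots> = M" unfolding M_def using \<tau>1 by (simp add: field_simps)
      finally show ?thesis .
    qed
    define V where "V = vertigo t A"
    have sV: "supp_le n V" unfolding V_def by (rule supp_vertigo[OF sA])
    have hV: "hermitian V" unfolding V_def by (rule vertigo_herm[OF sA hA])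
    have Vdiag: "M - B \<le> Re (V i i)" if i: "i \<le> n" for i
      using diag_bound[OF t2 sA hA i] Ann0 unfolding M_def B_def K_def \<tau>_def V_def Ann_def Am_def by simp
    have Voff: "cmod (V i j) \<le> B" if "i \<noteq> j" for i j
      using off_bound[OF t1 sA that] unfolding B_def K_def \<tau>_def V_def Am_def .
    have Vreal: "Im (V i i) = 0" for i unfolding V_def by (rule vertigo_diag_real[OF sA hA])
    have n2: "2 \<le> real (n+2)" by simp
    have MB2: "2 * B \<le> M" using MB B0 n2 by (meson mult_right_mono order_trans)
    have diagpos: "0 < Re (V i i)" if "i \<le> n" for i using Vdiag[OF that] MB2 M0 by linarith
    have diagnB: "real n * B \<le> Re (V i i)" if "i \<le> n" for i
    proof -
      have "real (n+2) * B = real n * B + 2 * B" by (simp add: algebra_simps)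
      then show ?thesis using Vdiag[OF that] MB B0 by linarith
    qed
    have psdV: "0 \<le> Re (\<Sum>i\<le>N. \<Sum>j\<le>N. cnj (v i) * V i j * v j)" for N v
      by (rule diag_dom_psd[OF sV Vreal diagnB Voff B0])
    define c where "c = Re (trn n V)"
    have trV: "trn n V = of_real c" unfolding c_def by (rule herm_tr[OF hV])
    have c0: "0 < c" unfolding c_def trn_def Re_sum using diagpos by (intro sum_pos) auto
    have mt: "mtrace V = of_real c" unfolding mtrace_fin[OF sV] trV[unfolded trn_def] ..
    define \<rho> where "\<rho> = lc (1/c) V 0 V"
    have vn: "vertigo_norm t A = \<rho>"
      unfolding vertigo_norm_def V_def[symmetric] mt \<rho>_def lc_def by (intro ext) (simp add: divide_inverse mult.commute)
    have srho: "supp_le n \<rho>" unfolding \<rho>_def by (intro lc_supp sV)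
    have rD: "\<rho> \<in> D_plus"
      unfolding D_plus_def is_state_def
    proof (intro CollectI conjI allI)
      show "hermitian \<rho>" unfolding \<rho>_def by (intro lc_herm hV)
      show "0 \<le> Re (\<Sum>i\<le>N. \<Sum>j\<le>N. cnj (v i) * \<rho> i j * v j)" for N v
      proof -
        have "(\<Sum>i\<le>N. \<Sum>j\<le>N. cnj (v i) * \<rho> i j * v j) = of_real (1/c) * (\<Sum>i\<le>N. \<Sum>j\<le>N. cnj (v i) * V i j * v j)"
          unfolding \<rho>_def lc_def sum_distrib_left by (simp add: mult_ac)
        then show ?thesis using psdV[where N=N and v=v] c0 by simp
      qed
      show "(\<lambda>i. \<rho> i i) sums 1"
      proof -
        have "(\<lambda>i. \<rho> i i) sums (\<Sum>i\<le>n. \<rho> i i)"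
          by (rule sums_finite) (auto simp: supp_leD[OF srho])
        moreover have "(\<Sum>i\<le>n. \<rho> i i) = 1"
          using lc_tr[of n "1/c" V 0 V] trV c0 unfolding trn_def \<rho>_def by simp
        ultimately show ?thesis by simp
      qed
      show "0 \<le> wigner \<rho> a" for a
        unfolding \<rho>_def lc_wigner[OF sV sV] unfolding V_def wigner_vertigo[OF sA tp]
        using wA c0 by simp
    qed
    have rDn: "\<rho> \<in> D_plus_n n" unfolding D_plus_n_def using rD srho by simp
    have rE: "\<rho> \<in> extr D_plus"
      by (rule extr_part[OF Ae tp c0 trV[unfolded V_def] \<rho>_def[unfolded V_def] rD])
    have rEn: "\<rho> \<in> extr (D_plus_n n)"
      using rE rDn unfolding extr_def D_plus_n_def by blast
    show "vertigo_norm t A \<in> extr (D_plus_n n) \<and> vertigo_norm t A \<in> extr D_plus"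
      unfolding vn using rE rEn by simp
  qed
  ultimately show ?thesis by blast
qed

end
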